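(* Let $\mathcal T_{\mathbf q}={\mathbb K}_{\mathbf q}[T_1^{\pm1},\ldots,T_n^{\pm1}]$ be a simple quantum torus and let $R=\mathcal T_{\mathbf q}[X_1,\ldots,X_m]$ be the commutative polynomial ring over $\mathcal T_{\mathbf q}$ in $m$ central variables. Then: (a) $\operatorname{Z}(R)={\mathbb K}[X_1,\ldots,X_m]$; (b) $\operatorname{Der}(R)=\operatorname{InnDer}(R)\oplus\bigoplus_{i=1}^n\operatorname{Z}(R)D_i\oplus\bigoplus_{j=1}^m\operatorname{Z}(R)\partial_j$, where $D_i,\partial_j$ are the derivations of $R$ defined by $D_i(T_k)=\delta_{ik}T_k$, $D_i(X_k)=0$, $\partial_j(T_k)=0$, $\partial_j(X_k)=\delta_{jk}$.
   Context: ${\mathbb K}$ is a field of characteristic $0$. For a multiplicatively skew-symmetric matrix $\mathbf q=(q_{ij})\in M_n({\mathbb K}^* )$ (i.e. $q_{ii}=1$, $q_{ij}=q_{ji}^{-1}$), the quantum torus ${\mathbb K}_{\mathbf q}[T_1^{\pm1},\ldots,T_n^{\pm1}]$ is the ${\mathbb K}$-algebra generated by $T_1^{\pm1},\ldots,T_n^{\pm1}$ with relations $T_iT_i^{-1}=T_i^{-1}T_i=1$ and $T_jT_i=q_{ij}T_iT_j$. It is simple iff its center is ${\mathbb K}$. $\operatorname{Z}$, $\operatorname{Der}$, $\operatorname{InnDer}$ denote center, ${\mathbb K}$-derivations and inner derivations. *)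

theory Defs
  imports Main
begin

text \<open>Concrete model of R = K_q[T_1^{+-1},...,T_n^{+-1}][X_1,...,X_m].
  Elements are finitely supported K-valued functions on exponent pairs (a,b),
  a : nat => int (exponents of T_0..T_{n-1}), b : nat => nat (exponents of
  X_0..X_{m-1}); the element f stands for sum f(a,b) T^a X^b with the ordered
  monomial T^a = T_0^{a 0} ... T_{n-1}^{a (n-1)}.  Indices are 0-based.\<close>

type_synonym 'k qel = "(nat \<Rightarrow> int) \<times> (nat \<Rightarrow> nat) \<Rightarrow> 'k"

definition exps :: "nat \<Rightarrow> nat \<Rightarrow> ((nat \<Rightarrow> int) \<times> (nat \<Rightarrow> nat)) set" where
  "exps n m = {(a,b). (\<forall>i. n \<le> i \<longrightarrow> a i = 0) \<and> (\<forall>j. m \<le> j \<longrightarrow> b j = 0)}"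

definition qcarrier :: "nat \<Rightarrow> nat \<Rightarrow> ('k::zero) qel set" where
  "qcarrier n m = {f. finite {x. f x \<noteq> 0} \<and> {x. f x \<noteq> 0} \<subseteq> exps n m}"

definition mult_skew :: "(nat \<Rightarrow> nat \<Rightarrow> 'k::field) \<Rightarrow> nat \<Rightarrow> bool" where
  "mult_skew q n = (\<forall>i<n. \<forall>j<n. q i j \<noteq> 0 \<and> q i i = 1 \<and> q i j = inverse (q j i))"

text \<open>T^a T^c = qcoef q n a c * T^(a+c), using T_j T_i = q i j T_i T_j,
  i.e. T_i^{a_i} T_j^{c_j} = q j i ^ (a_i c_j) T_j^{c_j} T_i^{a_i}.\<close>
definition qcoef :: "(nat \<Rightarrow> nat \<Rightarrow> 'k::field) \<Rightarrow> nat \<Rightarrow> (nat \<Rightarrow> int) \<Rightarrow> (nat \<Rightarrow> int) \<Rightarrow> 'k" where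
  "qcoef q n a c = (\<Prod>i<n. \<Prod>j<i. (q j i) powi (a i * c j))"

definition qmult :: "(nat \<Rightarrow> nat \<Rightarrow> 'k::field) \<Rightarrow> nat \<Rightarrow> 'k qel \<Rightarrow> 'k qel \<Rightarrow> 'k qel" where
  "qmult q n f g = (\<lambda>c. \<Sum>x\<in>{x. f x \<noteq> 0}. \<Sum>y\<in>{y. g y \<noteq> 0}.
      if (\<lambda>i. fst x i + fst y i) = fst c \<and> (\<lambda>j. snd x j + snd y j) = snd c
      then qcoef q n (fst x) (fst y) * f x * g y else 0)"

definition qadd :: "('k::field) qel \<Rightarrow> 'k qel \<Rightarrow> 'k qel" where
  "qadd f g = (\<lambda>x. f x + g x)"

definition qsmult :: "'k::field \<Rightarrow> 'k qel \<Rightarrow> 'k qel" where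
  "qsmult c f = (\<lambda>x. c * f x)"

definition qzero :: "('k::field) qel" where
  "qzero = (\<lambda>_. 0)"

definition qone :: "('k::field) qel" where
  "qone = (\<lambda>x. if x = (\<lambda>_. 0, \<lambda>_. 0) then 1 else 0)"

definition qT :: "nat \<Rightarrow> ('k::field) qel" where
  "qT k = (\<lambda>x. if x = (\<lambda>i. if i = k then 1 else 0, \<lambda>_. 0) then 1 else 0)"

definition qX :: "nat \<Rightarrow> ('k::field) qel" where
  "qX k = (\<lambda>x. if x = (\<lambda>_. 0, \<lambda>j. if j = k then 1 else 0) then 1 else 0)"

definition qideal :: "(nat \<Rightarrow> nat \<Rightarrow> 'k::field) \<Rightarrow> nat \<Rightarrow> nat \<Rightarrow> 'k qel set \<Rightarrow> bool" where
  "qideal q n m I = (I \<subseteq> qcarrier n m \<and> qzero \<in> I \<and>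
     (\<forall>f\<in>I. \<forall>g\<in>I. qadd f g \<in> I) \<and>
     (\<forall>f\<in>qcarrier n m. \<forall>g\<in>I. qmult q n f g \<in> I \<and> qmult q n g f \<in> I))"

definition qtorus_simple :: "(nat \<Rightarrow> nat \<Rightarrow> 'k::field) \<Rightarrow> nat \<Rightarrow> bool" where
  "qtorus_simple q n = (\<forall>I. qideal q n 0 I \<longrightarrow> I = {qzero} \<or> I = qcarrier n 0)"

definition qcenter :: "(nat \<Rightarrow> nat \<Rightarrow> 'k::field) \<Rightarrow> nat \<Rightarrow> nat \<Rightarrow> 'k qel set" where
  "qcenter q n m = {z \<in> qcarrier n m. \<forall>f\<in>qcarrier n m. qmult q n z f = qmult q n f z}"

definition polyX :: "nat \<Rightarrow> nat \<Rightarrow> ('k::field) qel set" where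
  "polyX n m = {f \<in> qcarrier n m. \<forall>x. f x \<noteq> 0 \<longrightarrow> fst x = (\<lambda>_. 0)}"

definition is_qder :: "(nat \<Rightarrow> nat \<Rightarrow> 'k::field) \<Rightarrow> nat \<Rightarrow> nat \<Rightarrow> ('k qel \<Rightarrow> 'k qel) \<Rightarrow> bool" where
  "is_qder q n m D = (
     (\<forall>f\<in>qcarrier n m. D f \<in> qcarrier n m) \<and>
     (\<forall>f\<in>qcarrier n m. \<forall>g\<in>qcarrier n m. D (qadd f g) = qadd (D f) (D g)) \<and>
     (\<forall>c. \<forall>f\<in>qcarrier n m. D (qsmult c f) = qsmult c (D f)) \<and>
     (\<forall>f\<in>qcarrier n m. \<forall>g\<in>qcarrier n m.
        D (qmult q n f g) = qadd (qmult q n (D f) g) (qmult q n f (D g))))"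

definition qad :: "(nat \<Rightarrow> nat \<Rightarrow> 'k::field) \<Rightarrow> nat \<Rightarrow> 'k qel \<Rightarrow> 'k qel \<Rightarrow> 'k qel" where
  "qad q n u f = (\<lambda>x. qmult q n u f x - qmult q n f u x)"

text \<open>D_i (T^a X^b) = a_i T^a X^b, and partial_j (T^a X^b) = b_j T^a X^(b - e_j).\<close>
definition qDT :: "nat \<Rightarrow> ('k::field) qel \<Rightarrow> 'k qel" where
  "qDT i f = (\<lambda>x. of_int (fst x i) * f x)"

definition qDX :: "nat \<Rightarrow> ('k::field) qel \<Rightarrow> 'k qel" where
  "qDX j f = (\<lambda>(a,b). of_nat (b j + 1) * f (a, b(j := b j + 1)))"

definition qcomb :: "(nat \<Rightarrow> nat \<Rightarrow> 'k::field) \<Rightarrow> nat \<Rightarrow> nat \<Rightarrow> 'k qel \<Rightarrow> (nat \<Rightarrow> 'k qel) \<Rightarrow> (nat \<Rightarrow> 'k qel) \<Rightarrow> 'k qel \<Rightarrow> 'k qel" where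
  "qcomb q n m u z w f = (\<lambda>x. qad q n u f x + (\<Sum>i<n. qmult q n (z i) (qDT i f) x)
        + (\<Sum>j<m. qmult q n (w j) (qDX j f) x))"

end

theory Submission
  imports Defs
begin


definition supp :: "('k::zero) qel \<Rightarrow> _ set" where "supp f = {x. f x \<noteq> 0}"
definition padd :: "(nat \<Rightarrow> int) \<times> (nat \<Rightarrow> nat) \<Rightarrow> (nat \<Rightarrow> int) \<times> (nat \<Rightarrow> nat) \<Rightarrow> (nat \<Rightarrow> int) \<times> (nat \<Rightarrow> nat)"
  where "padd x y = (\<lambda>i. fst x i + fst y i, \<lambda>j. snd x j + snd y j)"
definition mon :: "(nat \<Rightarrow> int) \<times> (nat \<Rightarrow> nat) \<Rightarrow> ('k::field) qel" where
  "mon x = (\<lambda>y. if y = x then 1 else 0)"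

lemma qmult_sup:
  assumes "finite S" "supp f \<subseteq> S" "finite T" "supp g \<subseteq> T"
  shows "qmult q n f g c = (\<Sum>x\<in>S. \<Sum>y\<in>T.
      if (\<lambda>i. fst x i + fst y i) = fst c \<and> (\<lambda>j. snd x j + snd y j) = snd c
      then qcoef q n (fst x) (fst y) * f x * g y else 0)"
proof -
  have "qmult q n f g c = (\<Sum>x\<in>supp f. \<Sum>y\<in>supp g.
      if (\<lambda>i. fst x i + fst y i) = fst c \<and> (\<lambda>j. snd x j + snd y j) = snd c
      then qcoef q n (fst x) (fst y) * f x * g y else 0)"
    unfolding qmult_def supp_def by simp
  also have "\<dots> = (\<Sum>x\<in>supp f. \<Sum>y\<in>T.
      if (\<lambda>i. fst x i + fst y i) = fst c \<and> (\<lambda>j. snd x j + snd y j) = snd c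
      then qcoef q n (fst x) (fst y) * f x * g y else 0)"
    by (intro sum.cong refl sum.mono_neutral_left assms) (auto simp: supp_def)
  also have "\<dots> = (\<Sum>x\<in>S. \<Sum>y\<in>T.
      if (\<lambda>i. fst x i + fst y i) = fst c \<and> (\<lambda>j. snd x j + snd y j) = snd c
      then qcoef q n (fst x) (fst y) * f x * g y else 0)"
    by (intro sum.mono_neutral_left assms) (force simp: supp_def intro!: sum.neutral)+
  finally show ?thesis .
qed

lemma carrier_iff: "f \<in> qcarrier n m \<longleftrightarrow> finite (supp f) \<and> supp f \<subseteq> exps n m"
  by (simp add: qcarrier_def supp_def)

lemma exps_iff: "x \<in> exps n m \<longleftrightarrow> (\<forall>i. n \<le> i \<longrightarrow> fst x i = 0) \<and> (\<forall>j. m \<le> j \<longrightarrow> snd x j = 0)"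
  by (cases x) (simp add: exps_def)

lemma supp_qmult: "supp (qmult q n f g) \<subseteq> (\<lambda>(x,y). padd x y) ` (supp f \<times> supp g)"
proof
  fix c assume "c \<in> supp (qmult q n f g)"
  then obtain x y where "x \<in> supp f" "y \<in> supp g" "(\<lambda>i. fst x i + fst y i) = fst c \<and> (\<lambda>j. snd x j + snd y j) = snd c"
    unfolding supp_def qmult_def
    by (smt (verit, del_insts) mem_Collect_eq sum.neutral)
  then show "c \<in> (\<lambda>(x,y). padd x y) ` (supp f \<times> supp g)"
    by (intro image_eqI[of _ _ "(x,y)"]) (auto simp: padd_def prod_eq_iff)
qed

lemma padd_exps: "x \<in> exps n m \<Longrightarrow> y \<in> exps n m \<Longrightarrow> padd x y \<in> exps n m"
  by (auto simp: exps_iff padd_def)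

lemma qmult_carrier: "f \<in> qcarrier n m \<Longrightarrow> g \<in> qcarrier n m \<Longrightarrow> qmult q n f g \<in> qcarrier n m"
proof -
  assume a: "f \<in> qcarrier n m" "g \<in> qcarrier n m"
  have fin: "finite ((\<lambda>(x,y). padd x y) ` (supp f \<times> supp g))" using a by (auto simp: carrier_iff)
  have sub: "(\<lambda>(x,y). padd x y) ` (supp f \<times> supp g) \<subseteq> exps n m"
    using a padd_exps by (fastforce simp: carrier_iff)
  show ?thesis unfolding carrier_iff using supp_qmult[of q n f g] fin sub
    by (meson finite_subset order_trans)
qed

lemma supp_qadd: "supp (qadd f g) \<subseteq> supp f \<union> supp g"
  by (auto simp: supp_def qadd_def)
lemma qadd_carrier: "f \<in> qcarrier n m \<Longrightarrow> g \<in> qcarrier n m \<Longrightarrow> qadd f g \<in> qcarrier n m"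
  unfolding carrier_iff using supp_qadd[of f g] by (auto intro: finite_subset)
lemma supp_qsmult: "supp (qsmult c f) \<subseteq> supp f"
  by (auto simp: supp_def qsmult_def)
lemma qsmult_carrier: "f \<in> qcarrier n m \<Longrightarrow> qsmult c f \<in> qcarrier n m"
  unfolding carrier_iff using supp_qsmult[of c f] by (auto intro: finite_subset)
lemma sub_carrier: "(f::'k::field qel) \<in> qcarrier n m \<Longrightarrow> g \<in> qcarrier n m \<Longrightarrow> (\<lambda>x. f x - g x) \<in> qcarrier n m"
proof -
  assume a: "f \<in> qcarrier n m" "g \<in> qcarrier n m"
  have "(\<lambda>x. f x - g x) = qadd f (qsmult (-1) g)" by (simp add: qadd_def qsmult_def fun_eq_iff)
  thus ?thesis using a by (simp add: qadd_carrier qsmult_carrier)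
qed
lemma qzero_carrier: "qzero \<in> qcarrier n m"
  by (simp add: carrier_iff supp_def qzero_def)
lemma supp_mon: "supp (mon x) = {x}" by (auto simp: supp_def mon_def)
lemma mon_carrier: "x \<in> exps n m \<Longrightarrow> mon x \<in> qcarrier n m"
  by (simp add: carrier_iff supp_mon)
lemma supp_qzero[simp]: "supp qzero = {}" by (simp add: supp_def qzero_def)

lemma qmult_zero_left[simp]: "qmult q n qzero g = qzero"
  by (simp add: qmult_def qzero_def fun_eq_iff)
lemma qmult_zero_right[simp]: "qmult q n f qzero = qzero"
  by (simp add: qmult_def qzero_def fun_eq_iff)

lemma qmult_add_left:
  assumes "f \<in> qcarrier n m" "g \<in> qcarrier n m" "h \<in> qcarrier n m"
  shows "qmult q n (qadd f g) h = qadd (qmult q n f h) (qmult q n g h)"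
proof (rule ext)
  fix c
  let ?S = "supp f \<union> supp g"
  have fin: "finite ?S" "finite (supp h)" using assms by (auto simp: carrier_iff)
  show "qmult q n (qadd f g) h c = qadd (qmult q n f h) (qmult q n g h) c"
    unfolding qadd_def
    apply (subst qmult_sup[OF fin(1) _ fin(2)], use supp_qadd[of f g] in \<open>simp add: qadd_def\<close>, simp)
    apply (subst qmult_sup[OF fin(1) _ fin(2)], simp, simp)
    apply (subst qmult_sup[OF fin(1) _ fin(2)], simp, simp)
    by (simp add: sum.distrib[symmetric] algebra_simps if_distrib cong: if_cong)
qed

lemma qmult_add_right:
  assumes "f \<in> qcarrier n m" "g \<in> qcarrier n m" "h \<in> qcarrier n m"
  shows "qmult q n h (qadd f g) = qadd (qmult q n h f) (qmult q n h g)"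
proof (rule ext)
  fix c
  let ?S = "supp f \<union> supp g"
  have fin: "finite ?S" "finite (supp h)" using assms by (auto simp: carrier_iff)
  show "qmult q n h (qadd f g) c = qadd (qmult q n h f) (qmult q n h g) c"
    unfolding qadd_def
    apply (subst qmult_sup[OF fin(2) _ fin(1)], simp, use supp_qadd[of f g] in \<open>simp add: qadd_def\<close>)
    apply (subst qmult_sup[OF fin(2) _ fin(1)], simp, simp)
    apply (subst qmult_sup[OF fin(2) _ fin(1)], simp, simp)
    by (simp add: sum.distrib[symmetric] algebra_simps if_distrib cong: if_cong)
qed

lemma qmult_smult_left:
  assumes "f \<in> qcarrier n m" "h \<in> qcarrier n m"
  shows "qmult q n (qsmult a f) h = qsmult a (qmult q n f h)"
proof (rule ext)
  fix c
  have fin: "finite (supp f)" "finite (supp h)" using assms by (auto simp: carrier_iff)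
  show "qmult q n (qsmult a f) h c = qsmult a (qmult q n f h) c"
    unfolding qsmult_def
    apply (subst qmult_sup[OF fin(1) _ fin(2)], use supp_qsmult[of a f] in \<open>simp add: qsmult_def\<close>, simp)
    apply (subst qmult_sup[OF fin(1) _ fin(2)], simp, simp)
    by (simp add: sum_distrib_left algebra_simps if_distrib cong: if_cong)
qed

lemma qmult_smult_right:
  assumes "f \<in> qcarrier n m" "h \<in> qcarrier n m"
  shows "qmult q n h (qsmult a f) = qsmult a (qmult q n h f)"
proof (rule ext)
  fix c
  have fin: "finite (supp f)" "finite (supp h)" using assms by (auto simp: carrier_iff)
  show "qmult q n h (qsmult a f) c = qsmult a (qmult q n h f) c"
    unfolding qsmult_def
    apply (subst qmult_sup[OF fin(2) _ fin(1)], simp, use supp_qsmult[of a f] in \<open>simp add: qsmult_def\<close>)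
    apply (subst qmult_sup[OF fin(2) _ fin(1)], simp, simp)
    by (simp add: sum_distrib_left algebra_simps if_distrib cong: if_cong)
qed


locale qt =
  fixes q :: "nat \<Rightarrow> nat \<Rightarrow> 'k::field_char_0" and n :: nat
  assumes skew: "mult_skew q n"
begin

lemma q_nz: "j < i \<Longrightarrow> i < n \<Longrightarrow> q j i \<noteq> 0"
  using skew unfolding mult_skew_def by (meson less_trans)

lemma qcoef_nz: "qcoef q n a c \<noteq> 0"
  unfolding qcoef_def using q_nz by (auto simp: prod_zero_iff)

lemma qcoef_add1: "qcoef q n (\<lambda>i. a i + a' i) c = qcoef q n a c * qcoef q n a' c"
proof -
  have "\<And>i j. j < i \<Longrightarrow> i < n \<Longrightarrow> q j i powi ((a i + a' i) * c j) = q j i powi (a i * c j) * q j i powi (a' i * c j)"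
    by (subst distrib_right, rule power_int_add) (simp add: q_nz)
  note h = this
  show ?thesis unfolding qcoef_def prod.distrib[symmetric]
    by (rule prod.cong[OF refl], rule prod.cong[OF refl], rule h) auto
qed

lemma qcoef_add2: "qcoef q n c (\<lambda>i. a i + a' i) = qcoef q n c a * qcoef q n c a'"
proof -
  have "\<And>i j. j < i \<Longrightarrow> i < n \<Longrightarrow> q j i powi (c i * (a j + a' j)) = q j i powi (c i * a j) * q j i powi (c i * a' j)"
    by (subst distrib_left, rule power_int_add) (simp add: q_nz)
  note h = this
  show ?thesis unfolding qcoef_def prod.distrib[symmetric]
    by (rule prod.cong[OF refl], rule prod.cong[OF refl], rule h) auto
qed

lemma qcoef_0l[simp]: "qcoef q n (\<lambda>_. 0) c = 1" by (simp add: qcoef_def)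
lemma qcoef_0r[simp]: "qcoef q n c (\<lambda>_. 0) = 1" by (simp add: qcoef_def)

lemma cocycle: "qcoef q n a b * qcoef q n (\<lambda>i. a i + b i) c = qcoef q n b c * qcoef q n a (\<lambda>i. b i + c i)"
  by (simp add: qcoef_add1 qcoef_add2)
end

lemma supp_mon': "{y. mon x y \<noteq> 0} = {x}" by (auto simp: mon_def)
lemma mon_apply: "mon x y = (if y = x then 1 else 0)" by (simp add: mon_def)

lemma padd_eq: "(c = padd x y) = ((\<lambda>i. fst x i + fst y i) = fst c \<and> (\<lambda>j. snd x j + snd y j) = snd c)"
  by (cases c) (auto simp: padd_def)

lemma qmult_mon_mon: "qmult q n (mon x) (mon y) = qsmult (qcoef q n (fst x) (fst y)) (mon (padd x y))"
proof (rule ext)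
  fix c
  have "qmult q n (mon x) (mon y) c = (if (\<lambda>i. fst x i + fst y i) = fst c \<and> (\<lambda>j. snd x j + snd y j) = snd c
      then qcoef q n (fst x) (fst y) * mon x x * mon y y else 0)"
    unfolding qmult_def supp_mon' by simp
  also have "\<dots> = qsmult (qcoef q n (fst x) (fst y)) (mon (padd x y)) c"
    unfolding qsmult_def mon_apply padd_eq by auto
  finally show "qmult q n (mon x) (mon y) c = qsmult (qcoef q n (fst x) (fst y)) (mon (padd x y)) c" .
qed

lemma qmult_Tl: "finite (supp g) \<Longrightarrow> qmult q n (mon (a, \<lambda>_. 0)) g c
   = qcoef q n a (\<lambda>i. fst c i - a i) * g (\<lambda>i. fst c i - a i, snd c)"
proof -
  assume fin: "finite (supp g)"
  have "qmult q n (mon (a, \<lambda>_. 0)) g c = (\<Sum>y\<in>supp g.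
      if (\<lambda>i. a i + fst y i) = fst c \<and> (\<lambda>j. snd y j) = snd c then qcoef q n a (fst y) * g y else 0)"
    unfolding qmult_def supp_mon' supp_def by (simp add: mon_apply cong: if_cong)
  also have "\<dots> = (\<Sum>y\<in>supp g.
      if y = (\<lambda>i. fst c i - a i, snd c) then qcoef q n a (fst y) * g y else 0)"
  proof (intro sum.cong refl)
    fix y :: "(nat \<Rightarrow> int) \<times> (nat \<Rightarrow> nat)"
    have "((\<lambda>i. a i + fst y i) = fst c \<and> (\<lambda>j. snd y j) = snd c) = (y = (\<lambda>i. fst c i - a i, snd c))"
      by (cases y) (auto simp: fun_eq_iff eq_diff_eq add.commute)
    thus "(if (\<lambda>i. a i + fst y i) = fst c \<and> (\<lambda>j. snd y j) = snd c then qcoef q n a (fst y) * g y else 0)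
      = (if y = (\<lambda>i. fst c i - a i, snd c) then qcoef q n a (fst y) * g y else 0)" by simp
  qed
  also have "\<dots> = qcoef q n a (\<lambda>i. fst c i - a i) * g (\<lambda>i. fst c i - a i, snd c)"
    using fin by (simp add: sum.delta' supp_def)
  finally show ?thesis .
qed

lemma qmult_Tr: "finite (supp g) \<Longrightarrow> qmult q n g (mon (a, \<lambda>_. 0)) c
   = qcoef q n (\<lambda>i. fst c i - a i) a * g (\<lambda>i. fst c i - a i, snd c)"
proof -
  assume fin: "finite (supp g)"
  have "qmult q n g (mon (a, \<lambda>_. 0)) c = (\<Sum>y\<in>supp g.
      if (\<lambda>i. fst y i + a i) = fst c \<and> (\<lambda>j. snd y j) = snd c then qcoef q n (fst y) a * g y else 0)"
    unfolding qmult_def supp_mon' supp_def by (simp add: mon_apply cong: if_cong)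
  also have "\<dots> = (\<Sum>y\<in>supp g.
      if y = (\<lambda>i. fst c i - a i, snd c) then qcoef q n (fst y) a * g y else 0)"
  proof (intro sum.cong refl)
    fix y :: "(nat \<Rightarrow> int) \<times> (nat \<Rightarrow> nat)"
    have "((\<lambda>i. fst y i + a i) = fst c \<and> (\<lambda>j. snd y j) = snd c) = (y = (\<lambda>i. fst c i - a i, snd c))"
      by (cases y) (auto simp: fun_eq_iff eq_diff_eq add.commute)
    thus "(if (\<lambda>i. fst y i + a i) = fst c \<and> (\<lambda>j. snd y j) = snd c then qcoef q n (fst y) a * g y else 0)
      = (if y = (\<lambda>i. fst c i - a i, snd c) then qcoef q n (fst y) a * g y else 0)" by simp
  qed
  also have "\<dots> = qcoef q n (\<lambda>i. fst c i - a i) a * g (\<lambda>i. fst c i - a i, snd c)"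
    using fin by (simp add: sum.delta' supp_def)
  finally show ?thesis .
qed

definition qlin :: "nat \<Rightarrow> nat \<Rightarrow> (('k::field) qel \<Rightarrow> 'k qel) \<Rightarrow> bool" where
  "qlin n m F = ((\<forall>f\<in>qcarrier n m. \<forall>g\<in>qcarrier n m. F (qadd f g) = qadd (F f) (F g))
     \<and> (\<forall>c. \<forall>f\<in>qcarrier n m. F (qsmult c f) = qsmult c (F f)))"

lemma lin_zero: "qlin n m F \<Longrightarrow> F qzero = qzero"
proof -
  assume "qlin n m F"
  hence "F (qsmult 0 qzero) = qsmult 0 (F qzero)" using qzero_carrier[of n m] by (auto simp: qlin_def)
  moreover have "qsmult 0 (F qzero) = qzero" "qsmult 0 qzero = (qzero :: 'a qel)"
    by (auto simp: qsmult_def qzero_def)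
  ultimately show ?thesis by simp
qed

lemma lin_ext:
  assumes F: "qlin n m F" and G: "qlin n m G" and mon: "\<And>x. x \<in> exps n m \<Longrightarrow> F (mon x) = G (mon x)"
    and f: "f \<in> qcarrier n m"
  shows "F f = G f"
proof -
  have "\<forall>f. f \<in> qcarrier n m \<longrightarrow> supp f = S \<longrightarrow> F f = G f" if "finite S" for S
    using that
  proof (induction S rule: finite_induct)
    case empty
    then show ?case
    proof (intro allI impI)
      fix f :: "'a qel" assume "supp f = {}"
      hence "f = qzero" by (auto simp: supp_def qzero_def fun_eq_iff)
      thus "F f = G f" using lin_zero[OF F] lin_zero[OF G] by simp
    qed
  next
    case (insert x S)
    show ?case
    proof (intro allI impI)
      fix f :: "'a qel" assume fc: "f \<in> qcarrier n m" and sf: "supp f = insert x S"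
      define f' where "f' = f(x := 0)"
      have sf': "supp f' = S" using sf insert(2) by (auto simp: supp_def f'_def)
      have xe: "x \<in> exps n m" using fc sf by (auto simp: carrier_iff)
      have f'c: "f' \<in> qcarrier n m" using fc sf' insert(1) sf by (auto simp: carrier_iff)
      have feq: "f = qadd (qsmult (f x) (mon x)) f'"
        by (auto simp: fun_eq_iff qadd_def qsmult_def mon_def f'_def)
      have mc: "qsmult (f x) (mon x) \<in> qcarrier n m" using xe by (simp add: qsmult_carrier mon_carrier)
      have "F (qsmult (f x) (mon x)) = qsmult (f x) (F (mon x))"
        using F mon_carrier[OF xe] unfolding qlin_def by blast
      hence e1: "F f = qadd (qsmult (f x) (F (mon x))) (F f')"
        using F mc f'c unfolding qlin_def by (subst feq) simp
      have "G (qsmult (f x) (mon x)) = qsmult (f x) (G (mon x))"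
        using G mon_carrier[OF xe] unfolding qlin_def by blast
      hence e2: "G f = qadd (qsmult (f x) (G (mon x))) (G f')"
        using G mc f'c unfolding qlin_def by (subst feq) simp
      note e1 e2
      show "F f = G f" using e1 e2 insert.IH f'c sf' mon[OF xe] by simp
    qed
  qed
  thus ?thesis using f by (auto simp: carrier_iff)
qed


lemma lin_mult_right: "h \<in> qcarrier n m \<Longrightarrow> qlin n m (\<lambda>f. qmult q n f h)"
  by (simp add: qlin_def qmult_add_left qmult_smult_left)
lemma lin_mult_left: "h \<in> qcarrier n m \<Longrightarrow> qlin n m (\<lambda>f. qmult q n h f)"
  by (simp add: qlin_def qmult_add_right qmult_smult_right)
lemma lin_comp: "qlin n m F \<Longrightarrow> (\<And>f. f \<in> qcarrier n m \<Longrightarrow> F f \<in> qcarrier n m) \<Longrightarrow> qlin n m G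
   \<Longrightarrow> qlin n m (\<lambda>f. G (F f))"
  by (simp add: qlin_def qadd_carrier qsmult_carrier)
lemma lin_add: "qlin n m F \<Longrightarrow> qlin n m G \<Longrightarrow> qlin n m (\<lambda>f. qadd (F f) (G f))"
  by (simp add: qlin_def qadd_def qsmult_def fun_eq_iff algebra_simps)

lemma qsmult_qsmult[simp]: "qsmult a (qsmult b f) = qsmult (a * b) f"
  by (simp add: qsmult_def fun_eq_iff)

lemma padd_assoc: "padd (padd x y) z = padd x (padd y z)"
  by (simp add: padd_def add.assoc)

lemma (in qt) assoc_mon:
  assumes "x \<in> exps n m" "y \<in> exps n m" "z \<in> exps n m"
  shows "qmult q n (qmult q n (mon x) (mon y)) (mon z) = qmult q n (mon x) (qmult q n (mon y) (mon z))"
proof -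
  have c: "mon (padd x y) \<in> qcarrier n m" "mon (padd y z) \<in> qcarrier n m" "mon z \<in> qcarrier n m" "mon x \<in> qcarrier n m"
    using assms by (auto intro!: mon_carrier padd_exps)
  have e: "qcoef q n (fst x) (fst y) * qcoef q n (fst (padd x y)) (fst z) = qcoef q n (fst y) (fst z) * qcoef q n (fst x) (fst (padd y z))"
    unfolding padd_def fst_conv by (rule cocycle)
  show ?thesis
    unfolding qmult_mon_mon
    unfolding qmult_smult_left[OF c(1) c(3)] qmult_smult_right[OF c(2) c(4)] qmult_mon_mon qsmult_qsmult padd_assoc e ..
qed

lemma (in qt) assoc:
  assumes f: "f \<in> qcarrier n m" and g: "g \<in> qcarrier n m" and h: "h \<in> qcarrier n m"
  shows "qmult q n (qmult q n f g) h = qmult q n f (qmult q n g h)"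
proof -
  have s2: "qmult q n (qmult q n f (mon y)) (mon z) = qmult q n f (qmult q n (mon y) (mon z))"
    if "f \<in> qcarrier n m" "y \<in> exps n m" "z \<in> exps n m" for f y z
  proof -
    have my: "mon y \<in> qcarrier n m" and mz: "mon z \<in> qcarrier n m" using that by (auto intro: mon_carrier)
    have l1: "qlin n m (\<lambda>f. qmult q n (qmult q n f (mon y)) (mon z))"
      by (rule lin_comp[OF lin_mult_right[OF my] _ lin_mult_right[OF mz]]) (rule qmult_carrier[OF _ my])
    have l2: "qlin n m (\<lambda>f. qmult q n f (qmult q n (mon y) (mon z)))"
      by (rule lin_mult_right[OF qmult_carrier[OF my mz]])
    show ?thesis using lin_ext[OF l1 l2 _ that(1)] assoc_mon that by blast
  qed
  have s3: "qmult q n (qmult q n f g) (mon z) = qmult q n f (qmult q n g (mon z))"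
    if "f \<in> qcarrier n m" "g \<in> qcarrier n m" "z \<in> exps n m" for f g z
  proof -
    have mz: "mon z \<in> qcarrier n m" using that by (auto intro: mon_carrier)
    have l1: "qlin n m (\<lambda>g. qmult q n (qmult q n f g) (mon z))"
      by (rule lin_comp[OF lin_mult_left[OF that(1)] _ lin_mult_right[OF mz]]) (rule qmult_carrier[OF that(1)])
    have l2: "qlin n m (\<lambda>g. qmult q n f (qmult q n g (mon z)))"
      by (rule lin_comp[OF lin_mult_right[OF mz] _ lin_mult_left[OF that(1)]]) (rule qmult_carrier[OF _ mz])
    show ?thesis using lin_ext[OF l1 l2 _ that(2)] s2 that by blast
  qed
  have l1: "qlin n m (\<lambda>h. qmult q n (qmult q n f g) h)"
    by (rule lin_mult_left[OF qmult_carrier[OF f g]])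
  have l2: "qlin n m (\<lambda>h. qmult q n f (qmult q n g h))"
    by (rule lin_comp[OF lin_mult_left[OF g] _ lin_mult_left[OF f]]) (rule qmult_carrier[OF g])
  show ?thesis using lin_ext[OF l1 l2 _ h] s3 f g by blast
qed

lemma qone_mon: "qone = mon (\<lambda>_. 0, \<lambda>_. 0)"
  by (simp add: qone_def mon_def fun_eq_iff)

lemma (in qt) qone_left: "f \<in> qcarrier n m \<Longrightarrow> qmult q n qone f = f"
  unfolding qone_mon by (rule ext) (subst qmult_Tl, auto simp: carrier_iff)
lemma (in qt) qone_right: "f \<in> qcarrier n m \<Longrightarrow> qmult q n f qone = f"
  unfolding qone_mon by (rule ext) (subst qmult_Tr, auto simp: carrier_iff)
lemma qone_carrier: "qone \<in> qcarrier n m"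
  unfolding qone_mon by (rule mon_carrier) (simp add: exps_iff)

lemma der_from_mon:
  assumes cl: "\<And>f. f \<in> qcarrier n m \<Longrightarrow> D f \<in> qcarrier n m" and lin: "qlin n m D"
    and monl: "\<And>x y. x \<in> exps n m \<Longrightarrow> y \<in> exps n m \<Longrightarrow>
       D (qmult q n (mon x) (mon y)) = qadd (qmult q n (D (mon x)) (mon y)) (qmult q n (mon x) (D (mon y)))"
  shows "is_qder q n m D"
proof -
  have sA: "D (qmult q n f (mon y)) = qadd (qmult q n (D f) (mon y)) (qmult q n f (D (mon y)))"
    if "f \<in> qcarrier n m" "y \<in> exps n m" for f y
  proof -
    have my: "mon y \<in> qcarrier n m" using that by (auto intro: mon_carrier)
    have l1: "qlin n m (\<lambda>f. D (qmult q n f (mon y)))"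
      by (rule lin_comp[OF lin_mult_right[OF my] _ lin]) (rule qmult_carrier[OF _ my])
    have l2: "qlin n m (\<lambda>f. qadd (qmult q n (D f) (mon y)) (qmult q n f (D (mon y))))"
      by (rule lin_add[OF lin_comp[OF lin cl lin_mult_right[OF my]] lin_mult_right[OF cl[OF my]]])
    show ?thesis using lin_ext[OF l1 l2 _ that(1)] monl that by blast
  qed
  have sB: "D (qmult q n f g) = qadd (qmult q n (D f) g) (qmult q n f (D g))"
    if "f \<in> qcarrier n m" "g \<in> qcarrier n m" for f g
  proof -
    have l1: "qlin n m (\<lambda>g. D (qmult q n f g))"
      by (rule lin_comp[OF lin_mult_left[OF that(1)] _ lin]) (rule qmult_carrier[OF that(1)])
    have l2: "qlin n m (\<lambda>g. qadd (qmult q n (D f) g) (qmult q n f (D g)))"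
      by (rule lin_add[OF lin_mult_left[OF cl[OF that(1)]] lin_comp[OF lin cl lin_mult_left[OF that(1)]]])
    show ?thesis using lin_ext[OF l1 l2 _ that(2)] sA that by blast
  qed
  show ?thesis using cl lin sB by (auto simp: is_qder_def qlin_def)
qed


lemma supp_qDT: "supp (qDT i f) \<subseteq> supp f" by (auto simp: supp_def qDT_def)
lemma qDT_carrier: "f \<in> qcarrier n m \<Longrightarrow> qDT i f \<in> qcarrier n m"
  using supp_qDT[of i f] by (auto simp: carrier_iff intro: finite_subset)
lemma qDT_lin: "qlin n m (qDT i)"
  by (simp add: qlin_def qDT_def qadd_def qsmult_def fun_eq_iff algebra_simps)
lemma qDT_mon: "qDT i (mon x) = qsmult (of_int (fst x i)) (mon x)"
  by (auto simp: qDT_def qsmult_def mon_def fun_eq_iff)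

lemma qDT_der: "is_qder q n m (qDT i)"
proof (rule der_from_mon[OF qDT_carrier qDT_lin])
  fix x y assume xy: "x \<in> exps n m" "y \<in> exps n m"
  have c: "mon x \<in> qcarrier n m" "mon y \<in> qcarrier n m" using xy by (auto intro: mon_carrier)
  show "qDT i (qmult q n (mon x) (mon y)) = qadd (qmult q n (qDT i (mon x)) (mon y)) (qmult q n (mon x) (qDT i (mon y)))"
    by (simp only: qDT_mon qmult_smult_left[OF c] qmult_smult_right[OF c(2) c(1)] qmult_mon_mon;
        auto simp: qDT_def qsmult_def qadd_def mon_def fun_eq_iff padd_def algebra_simps)
qed

lemma supp_qDX: "supp (qDX j f) \<subseteq> (\<lambda>(a,b). (a, b(j := b j - 1))) ` supp f"
proof
  fix x assume "x \<in> supp (qDX j f)"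
  then obtain a b where x: "x = (a,b)" and nz: "f (a, b(j := b j + 1)) \<noteq> 0"
    by (cases x) (auto simp: supp_def qDX_def)
  show "x \<in> (\<lambda>(a,b). (a, b(j := b j - 1))) ` supp f"
    using nz x by (intro image_eqI[of _ _ "(a, b(j := b j + 1))"]) (auto simp: supp_def)
qed

lemma qDX_carrier: "f \<in> qcarrier n m \<Longrightarrow> qDX j f \<in> qcarrier n m"
proof -
  assume f: "f \<in> qcarrier n m"
  have "supp (qDX j f) \<subseteq> exps n m"
  proof
    fix x assume "x \<in> supp (qDX j f)"
    then obtain a b where x: "x = (a,b)" and nz: "f (a, b(j := b j + 1)) \<noteq> 0"
      by (cases x) (auto simp: supp_def qDX_def)
    hence "(a, b(j := b j + 1)) \<in> exps n m" using f by (auto simp: carrier_iff supp_def)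
    thus "x \<in> exps n m" unfolding x exps_iff by (auto split: if_splits)
  qed
  moreover have "finite (supp (qDX j f))"
    using f supp_qDX[of j f] by (auto simp: carrier_iff intro: finite_subset)
  ultimately show ?thesis by (simp add: carrier_iff)
qed

lemma qDX_lin: "qlin n m (qDX j)"
  by (simp add: qlin_def qDX_def qadd_def qsmult_def fun_eq_iff algebra_simps)

lemma upd_iff: fixes b d :: "nat \<Rightarrow> nat" shows "(d(j := d j + 1) = b) \<longleftrightarrow> (b j > 0 \<and> d = b(j := b j - 1))"
proof
  assume h: "d(j := d j + 1) = b"
  hence bj: "b j = d j + 1" by auto
  show "b j > 0 \<and> d = b(j := b j - 1)"
  proof
    show "b j > 0" using bj by simp
    show "d = b(j := b j - 1)"
    proof
      fix k show "d k = (b(j := b j - 1)) k" using h bj by (cases "k = j") auto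
    qed
  qed
next
  assume h: "b j > 0 \<and> d = b(j := b j - 1)"
  show "d(j := d j + 1) = b"
  proof
    fix k show "(d(j := d j + 1)) k = b k" using h by (cases "k = j") auto
  qed
qed

lemma qDX_mon: "qDX j (mon x) = qsmult (of_nat (snd x j)) (mon (fst x, (snd x)(j := snd x j - 1)))"
proof (rule ext)
  fix y :: "(nat \<Rightarrow> int) \<times> (nat \<Rightarrow> nat)"
  obtain a b where x: "x = (a,b)" by (cases x)
  obtain c d where y: "y = (c,d)" by (cases y)
  have "qDX j (mon x) y = (if c = a \<and> d(j := d j + 1) = b then of_nat (d j + 1) else 0)"
    unfolding x y qDX_def mon_apply by simp
  also have "\<dots> = (if c = a \<and> b j > 0 \<and> d = b(j := b j - 1) then of_nat (b j) else 0)"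
    unfolding upd_iff by auto
  also have "\<dots> = qsmult (of_nat (snd x j)) (mon (fst x, (snd x)(j := snd x j - 1))) y"
    unfolding x y qsmult_def mon_apply by auto
  finally show "qDX j (mon x) y = qsmult (of_nat (snd x j)) (mon (fst x, (snd x)(j := snd x j - 1))) y" .
qed

lemma qDX_smult: "qDX j (qsmult c f) = qsmult c (qDX j f)"
  by (simp add: qDX_def qsmult_def fun_eq_iff algebra_simps)

lemma smult_comb:
  assumes "s > 0 \<Longrightarrow> P1 = P" "t > 0 \<Longrightarrow> P2 = P"
  shows "qsmult Q (qsmult (of_nat (s + t)) (mon P)) = qadd (qsmult (of_nat s) (qsmult Q (mon P1)))
          (qsmult (of_nat t) (qsmult (Q::'a::field) (mon P2)))"
  using assms by (cases "s = 0"; cases "t = 0") (auto simp: qsmult_def qadd_def fun_eq_iff algebra_simps)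

lemma dx_aux:
  fixes b b' :: "nat \<Rightarrow> nat"
  shows "qsmult Q (qsmult (of_nat (b j + b' j)) (mon (A, (\<lambda>k. b k + b' k)(j := b j + b' j - 1))))
   = qadd (qsmult (of_nat (b j)) (qsmult Q (mon (A, \<lambda>k. (b(j := b j - 1)) k + b' k))))
          (qsmult (of_nat (b' j)) (qsmult (Q::'a::field) (mon (A, \<lambda>k. b k + (b'(j := b' j - 1)) k))))"
  by (rule smult_comb) (auto simp: fun_eq_iff)

lemma qDX_der: "is_qder q n m (qDX j)"
proof (rule der_from_mon[OF qDX_carrier qDX_lin])
  fix x y assume xy: "x \<in> exps n m" "y \<in> exps n m"
  obtain a b where x: "x = (a,b)" by (cases x)
  obtain a' b' where y: "y = (a',b')" by (cases y)
  have c: "mon x \<in> qcarrier n m" "mon y \<in> qcarrier n m" "mon (fst x, (snd x)(j := snd x j - 1)) \<in> qcarrier n m"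
    "mon (fst y, (snd y)(j := snd y j - 1)) \<in> qcarrier n m"
    using xy by (auto intro!: mon_carrier simp: exps_iff)
  show "qDX j (qmult q n (mon x) (mon y)) = qadd (qmult q n (qDX j (mon x)) (mon y)) (qmult q n (mon x) (qDX j (mon y)))"
    unfolding qDX_mon qmult_mon_mon qmult_smult_left[OF c(3) c(2)] qmult_smult_right[OF c(4) c(1)] qDX_smult
    unfolding x y padd_def fst_conv snd_conv using dx_aux[of "qcoef q n a a'" b j b' "\<lambda>i. a i + a' i"]
    by simp
qed


lemma der_add:
  assumes D1: "is_qder q n m D1" and D2: "is_qder q n m D2"
  shows "is_qder q n m (\<lambda>f. qadd (D1 f) (D2 f))"
proof -
  have c1: "\<And>f. f \<in> qcarrier n m \<Longrightarrow> D1 f \<in> qcarrier n m" and c2: "\<And>f. f \<in> qcarrier n m \<Longrightarrow> D2 f \<in> qcarrier n m"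
    using D1 D2 by (auto simp: is_qder_def)
  have L: "qmult q n (qadd (D1 f) (D2 f)) g = qadd (qmult q n (D1 f) g) (qmult q n (D2 f) g)"
    "qmult q n f (qadd (D1 g) (D2 g)) = qadd (qmult q n f (D1 g)) (qmult q n f (D2 g))"
    if "f \<in> qcarrier n m" "g \<in> qcarrier n m" for f g
    using that c1 c2 by (auto intro!: qmult_add_left qmult_add_right)
  show ?thesis using D1 D2 unfolding is_qder_def
    by (auto simp: qadd_carrier L) (auto simp: qadd_def qsmult_def fun_eq_iff algebra_simps)
qed

lemma der_smult:
  assumes D: "is_qder q n m D"
  shows "is_qder q n m (\<lambda>f. qsmult c (D f))"
proof -
  have c1: "\<And>f. f \<in> qcarrier n m \<Longrightarrow> D f \<in> qcarrier n m"
    using D by (auto simp: is_qder_def)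
  have L: "qmult q n (qsmult c (D f)) g = qsmult c (qmult q n (D f) g)"
    "qmult q n f (qsmult c (D g)) = qsmult c (qmult q n f (D g))"
    if "f \<in> qcarrier n m" "g \<in> qcarrier n m" for f g
    using that c1 by (auto intro!: qmult_smult_left qmult_smult_right)
  show ?thesis using D unfolding is_qder_def
    by (auto simp: qsmult_carrier L) (auto simp: qadd_def qsmult_def fun_eq_iff algebra_simps)
qed

lemma der_zero: "is_qder q n m (\<lambda>f. qzero)"
  by (simp add: is_qder_def qzero_carrier) (simp add: qadd_def qsmult_def qzero_def fun_eq_iff)

lemma der_sum:
  assumes "finite I" "\<And>i. i \<in> I \<Longrightarrow> is_qder q n m (Dd i)"
  shows "is_qder q n m (\<lambda>f x. \<Sum>i\<in>I. Dd i f x)"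
  using assms
proof (induction I rule: finite_induct)
  case empty
  then show ?case using der_zero[of q n m] by (simp add: qzero_def)
next
  case (insert i I)
  have "(\<lambda>f x. \<Sum>i\<in>insert i I. Dd i f x) = (\<lambda>f. qadd (Dd i f) (\<lambda>x. \<Sum>i\<in>I. Dd i f x))"
    using insert(1,2) by (simp add: qadd_def fun_eq_iff)
  then show ?case using der_add[OF insert(4)[of i] insert(3)] insert(4) by simp
qed

lemma qmult_sub_left:
  fixes a :: "'k::field qel"
  assumes "a \<in> qcarrier n m" "b \<in> qcarrier n m" "g \<in> qcarrier n m"
  shows "qmult q n (\<lambda>x. a x - b x) g = (\<lambda>x. qmult q n a g x - qmult q n b g x)"
proof -
  have e: "(\<lambda>x. a x - b x) = qadd a (qsmult (-1) b)" by (simp add: qadd_def qsmult_def fun_eq_iff)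
  show ?thesis unfolding e using assms
    by (simp add: qmult_add_left qmult_smult_left qsmult_carrier) (simp add: qadd_def qsmult_def fun_eq_iff)
qed

lemma qmult_sub_right:
  fixes a :: "'k::field qel"
  assumes "a \<in> qcarrier n m" "b \<in> qcarrier n m" "g \<in> qcarrier n m"
  shows "qmult q n g (\<lambda>x. a x - b x) = (\<lambda>x. qmult q n g a x - qmult q n g b x)"
proof -
  have e: "(\<lambda>x. a x - b x) = qadd a (qsmult (-1) b)" by (simp add: qadd_def qsmult_def fun_eq_iff)
  show ?thesis unfolding e using assms
    by (simp add: qmult_add_right qmult_smult_right qsmult_carrier) (simp add: qadd_def qsmult_def fun_eq_iff)
qed

context qt begin

lemma der_ad:
  assumes u: "u \<in> qcarrier n m"
  shows "is_qder q n m (qad q n u)"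
  unfolding is_qder_def
proof (intro conjI ballI allI)
  fix f :: "'k qel" assume f: "f \<in> qcarrier n m"
  show "qad q n u f \<in> qcarrier n m" unfolding qad_def using u f by (intro sub_carrier qmult_carrier)
next
  fix f g :: "'k qel" assume f: "f \<in> qcarrier n m" and g: "g \<in> qcarrier n m"
  show "qad q n u (qadd f g) = qadd (qad q n u f) (qad q n u g)"
    unfolding qad_def using u f g by (simp add: qmult_add_left qmult_add_right) (simp add: qadd_def fun_eq_iff)
next
  fix c and f :: "'k qel" assume f: "f \<in> qcarrier n m"
  show "qad q n u (qsmult c f) = qsmult c (qad q n u f)"
    unfolding qad_def using u f by (simp add: qmult_smult_left qmult_smult_right) (simp add: qsmult_def fun_eq_iff algebra_simps)
next
  fix f g :: "'k qel" assume f: "f \<in> qcarrier n m" and g: "g \<in> qcarrier n m"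
  have c: "qmult q n u f \<in> qcarrier n m" "qmult q n f u \<in> qcarrier n m" "qmult q n u g \<in> qcarrier n m"
    "qmult q n g u \<in> qcarrier n m" using u f g by (auto intro: qmult_carrier)
  show "qad q n u (qmult q n f g) = qadd (qmult q n (qad q n u f) g) (qmult q n f (qad q n u g))"
    unfolding qad_def qmult_sub_left[OF c(1,2) g] qmult_sub_right[OF c(3,4) f]
    unfolding assoc[OF u f g] assoc[OF f u g] assoc[OF f g u]
    by (simp add: qadd_def fun_eq_iff)
qed

lemma der_central:
  assumes z: "z \<in> qcenter q n m" and D: "is_qder q n m D"
  shows "is_qder q n m (\<lambda>f. qmult q n z (D f))"
  unfolding is_qder_def
proof (intro conjI ballI allI)
  have zc: "z \<in> qcarrier n m" and zf: "\<And>f. f \<in> qcarrier n m \<Longrightarrow> qmult q n z f = qmult q n f z"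
    using z by (auto simp: qcenter_def)
  have Dc: "\<And>f. f \<in> qcarrier n m \<Longrightarrow> D f \<in> qcarrier n m" using D by (simp add: is_qder_def)
  {
    fix f :: "'k qel" assume f: "f \<in> qcarrier n m"
    show "qmult q n z (D f) \<in> qcarrier n m" using zc Dc f by (intro qmult_carrier)
  next
    fix f g :: "'k qel" assume f: "f \<in> qcarrier n m" and g: "g \<in> qcarrier n m"
    show "qmult q n z (D (qadd f g)) = qadd (qmult q n z (D f)) (qmult q n z (D g))"
      using D f g zc Dc unfolding is_qder_def by (simp add: qmult_add_right[OF Dc[OF f] Dc[OF g] zc])
  next
    fix c and f :: "'k qel" assume f: "f \<in> qcarrier n m"
    show "qmult q n z (D (qsmult c f)) = qsmult c (qmult q n z (D f))"
      using D f zc Dc unfolding is_qder_def by (simp add: qmult_smult_right[OF Dc[OF f] zc])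
  next
    fix f g :: "'k qel" assume f: "f \<in> qcarrier n m" and g: "g \<in> qcarrier n m"
    have "qmult q n z (D (qmult q n f g)) = qmult q n z (qadd (qmult q n (D f) g) (qmult q n f (D g)))"
      using D f g by (simp add: is_qder_def)
    also have "\<dots> = qadd (qmult q n z (qmult q n (D f) g)) (qmult q n z (qmult q n f (D g)))"
      using f g Dc zc by (intro qmult_add_right) (auto intro: qmult_carrier)
    also have "qmult q n z (qmult q n f (D g)) = qmult q n f (qmult q n z (D g))"
      using f g Dc zc zf[OF f] by (metis assoc)
    also have "qmult q n z (qmult q n (D f) g) = qmult q n (qmult q n z (D f)) g"
      using f g Dc zc by (simp add: assoc)
    finally show "qmult q n z (D (qmult q n f g)) = qadd (qmult q n (qmult q n z (D f)) g) (qmult q n f (qmult q n z (D g)))" .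
  }
qed

lemma qcomb_der:
  assumes u: "u \<in> qcarrier n m" and z: "\<forall>i<n. z i \<in> qcenter q n m" and w: "\<forall>j<m. w j \<in> qcenter q n m"
  shows "is_qder q n m (qcomb q n m u z w)"
proof -
  have e: "qcomb q n m u z w = (\<lambda>f. qadd (qadd (qad q n u f) (\<lambda>x. \<Sum>i<n. qmult q n (z i) (qDT i f) x))
     (\<lambda>x. \<Sum>j<m. qmult q n (w j) (qDX j f) x))"
    by (simp add: qcomb_def qadd_def fun_eq_iff)
  show ?thesis unfolding e
    by (intro der_add der_ad u der_sum finite_lessThan der_central qDT_der qDX_der) (use z w in auto)
qed

end


definition ee :: "nat \<Rightarrow> nat \<Rightarrow> int" where "ee k = (\<lambda>i. if i = k then 1 else 0)"
definition eX :: "nat \<Rightarrow> nat \<Rightarrow> nat" where "eX k = (\<lambda>i. if i = k then 1 else 0)"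

lemma qT_eq: "qT k = mon (ee k, \<lambda>_. 0)" by (simp add: qT_def mon_def ee_def fun_eq_iff)
lemma qX_eq: "qX k = mon (\<lambda>_. 0, eX k)" by (simp add: qX_def mon_def eX_def fun_eq_iff)

lemma ee_exps: "k < n \<Longrightarrow> (ee k, \<lambda>_. 0) \<in> exps n m" by (simp add: exps_iff ee_def)
lemma mee_exps: "k < n \<Longrightarrow> (\<lambda>i. - ee k i, \<lambda>_. 0) \<in> exps n m" by (simp add: exps_iff ee_def)
lemma eX_exps: "k < m \<Longrightarrow> (\<lambda>_. 0, eX k) \<in> exps n m" by (simp add: exps_iff eX_def)

lemma der_lin: "is_qder q n m D \<Longrightarrow> qlin n m D" by (simp add: is_qder_def qlin_def)
lemma der_cl: "is_qder q n m D \<Longrightarrow> f \<in> qcarrier n m \<Longrightarrow> D f \<in> qcarrier n m" by (simp add: is_qder_def)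
lemma der_mult: "is_qder q n m D \<Longrightarrow> f \<in> qcarrier n m \<Longrightarrow> g \<in> qcarrier n m \<Longrightarrow>
   D (qmult q n f g) = qadd (qmult q n (D f) g) (qmult q n f (D g))" by (simp add: is_qder_def)
lemma der_smult': "is_qder q n m D \<Longrightarrow> f \<in> qcarrier n m \<Longrightarrow> D (qsmult c f) = qsmult c (D f)"
  by (simp add: is_qder_def)

lemma qadd_zero_left[simp]: "qadd qzero f = f" by (simp add: qadd_def qzero_def)
lemma qadd_zero_right[simp]: "qadd f qzero = f" by (simp add: qadd_def qzero_def)
lemma qsmult_zero[simp]: "qsmult c qzero = qzero" by (simp add: qsmult_def qzero_def)

lemma nmeasure_dec1:
  fixes a :: "nat \<Rightarrow> 'b::comm_monoid_add" and h :: "'b \<Rightarrow> nat"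
  assumes "i < n"
  shows "(\<Sum>l<n. h ((a(i := v)) l)) + h (a i) = (\<Sum>l<n. h (a l)) + h v"
proof -
  have "(\<Sum>l<n. h ((a(i := v)) l)) = h v + (\<Sum>l\<in>{..<n} - {i}. h (a l))"
    using assms by (simp add: sum.remove[of "{..<n}" i])
  moreover have "(\<Sum>l<n. h (a l)) = h (a i) + (\<Sum>l\<in>{..<n} - {i}. h (a l))"
    using assms by (simp add: sum.remove[of "{..<n}" i])
  ultimately show ?thesis by simp
qed

context qt begin

lemma der_one: "is_qder q n m D \<Longrightarrow> D qone = qzero"
proof -
  assume D: "is_qder q n m D"
  have "D qone = D (qmult q n qone qone)" using qone_left[OF qone_carrier] by simp
  also have "\<dots> = qadd (D qone) (D qone)"
    using der_mult[OF D qone_carrier qone_carrier] qone_left[OF der_cl[OF D qone_carrier]]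
      qone_right[OF der_cl[OF D qone_carrier]] by simp
  finally have "\<And>x. D qone x = D qone x + D qone x" by (metis qadd_def)
  thus ?thesis by (simp add: qzero_def fun_eq_iff)
qed

definition N :: "nat \<Rightarrow> (nat \<Rightarrow> int) \<times> (nat \<Rightarrow> nat) \<Rightarrow> nat" where
  "N m x = (\<Sum>l<n. nat \<bar>fst x l\<bar>) + (\<Sum>l<m. snd x l)"

lemma der_gen:
  assumes E: "is_qder q n m E" and ET: "\<And>k. k < n \<Longrightarrow> E (qT k) = qzero"
    and EX: "\<And>j. j < m \<Longrightarrow> E (qX j) = qzero"
    and f: "f \<in> qcarrier n m"
  shows "E f = qzero"
proof -
  have Tc: "\<And>k. k < n \<Longrightarrow> qT k \<in> qcarrier n m" unfolding qT_eq by (intro mon_carrier ee_exps)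
  have Tic: "\<And>k. k < n \<Longrightarrow> mon (\<lambda>i. - ee k i, \<lambda>_. 0) \<in> qcarrier n m" by (intro mon_carrier mee_exps)
  have Xc: "\<And>k. k < m \<Longrightarrow> qX k \<in> qcarrier n m" unfolding qX_eq by (intro mon_carrier eX_exps)
  have ETi: "E (mon (\<lambda>i. - ee k i, \<lambda>_. 0)) = qzero" if k: "k < n" for k
  proof -
    let ?Ti = "mon (\<lambda>i. - ee k i, \<lambda>_. 0) :: 'k qel"
    have pr1: "qmult q n (qT k) ?Ti = qsmult (qcoef q n (ee k) (\<lambda>i. - ee k i)) qone"
      unfolding qT_eq qmult_mon_mon qone_mon by (simp add: padd_def)
    have pr2: "qmult q n ?Ti (qT k) = qsmult (qcoef q n (\<lambda>i. - ee k i) (ee k)) qone"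
      unfolding qT_eq qmult_mon_mon qone_mon by (simp add: padd_def)
    have "E (qmult q n (qT k) ?Ti) = qmult q n (qT k) (E ?Ti)"
      using der_mult[OF E Tc[OF k] Tic[OF k]] ET[OF k] by simp
    moreover have "E (qmult q n (qT k) ?Ti) = qzero"
      unfolding pr1 der_smult'[OF E qone_carrier] der_one[OF E] by simp
    ultimately have z: "qmult q n (qT k) (E ?Ti) = qzero" by simp
    have "qmult q n ?Ti (qmult q n (qT k) (E ?Ti)) = qsmult (qcoef q n (\<lambda>i. - ee k i) (ee k)) (E ?Ti)"
      unfolding assoc[OF Tic[OF k] Tc[OF k] der_cl[OF E Tic[OF k]], symmetric] pr2
      using qmult_smult_left[OF qone_carrier der_cl[OF E Tic[OF k]]] qone_left[OF der_cl[OF E Tic[OF k]]] by simp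
    hence "qsmult (qcoef q n (\<lambda>i. - ee k i) (ee k)) (E ?Ti) = qzero" unfolding z by simp
    thus ?thesis using qcoef_nz by (simp add: qsmult_def qzero_def fun_eq_iff)
  qed
  have main: "\<forall>x. x \<in> exps n m \<longrightarrow> N m x = K \<longrightarrow> E (mon x) = qzero" for K
  proof (induction K)
    case 0
    show ?case
    proof (intro allI impI)
      fix x :: "(nat \<Rightarrow> int) \<times> (nat \<Rightarrow> nat)" assume x: "x \<in> exps n m" "N m x = 0"
      have "x = (\<lambda>_. 0, \<lambda>_. 0)"
      proof -
        have a: "fst x l = 0" for l
          using x by (cases "l < n") (auto simp: N_def exps_iff)
        have b: "snd x l = 0" for l
          using x by (cases "l < m") (auto simp: N_def exps_iff)
        show ?thesis using a b by (simp add: prod_eq_iff fun_eq_iff)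
      qed
      thus "E (mon x) = qzero" using der_one[OF E] by (simp add: qone_mon)
    qed
  next
    case (Suc K)
    show ?case
    proof (intro allI impI)
      fix x :: "(nat \<Rightarrow> int) \<times> (nat \<Rightarrow> nat)" assume x: "x \<in> exps n m" "N m x = Suc K"
      obtain a b where xab: "x = (a,b)" by (cases x)
      show "E (mon x) = qzero"
      proof (cases "\<exists>j<m. b j > 0")
        case True
        then obtain j where j: "j < m" "b j > 0" by auto
        define x' where "x' = (a, b(j := b j - 1))"
        have x'e: "x' \<in> exps n m" using x xab by (auto simp: x'_def exps_iff)
        have Nx': "N m x' = K"
          using x xab j nmeasure_dec1[where i=j and n=m and h="\<lambda>v. v" and a=b and v="b j - 1"] by (simp add: N_def x'_def)
        have eq: "mon x = qmult q n (mon x') (qX j)"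
          unfolding qX_eq qmult_mon_mon using j(2)
          by (simp add: x'_def xab padd_def eX_def qsmult_def mon_def fun_eq_iff)
        show ?thesis unfolding eq
          using der_mult[OF E mon_carrier[OF x'e] Xc[OF j(1)]] Suc.IH x'e Nx' EX[OF j(1)] by simp
      next
        case False
        have "\<exists>i<n. a i \<noteq> 0"
        proof (rule ccontr)
          assume "\<not> (\<exists>i<n. a i \<noteq> 0)"
          hence "N m x = 0" using False xab by (simp add: N_def)
          thus False using x by simp
        qed
        then obtain i where i: "i < n" "a i \<noteq> 0" by auto
        show ?thesis
        proof (cases "a i > 0")
          case True
          define x' where "x' = (a(i := a i - 1), b)"
          have x'e: "x' \<in> exps n m" using x xab i by (auto simp: x'_def exps_iff)
          have Nx': "N m x' = K"
            using x xab i True nmeasure_dec1[where i=i and n=n and h="\<lambda>v. nat \<bar>v\<bar>" and a=a and v="a i - 1"] by (simp add: N_def x'_def)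
          have fe: "(\<lambda>l. (a(i := a i - 1)) l + ee i l) = a" by (auto simp: ee_def fun_eq_iff)
          have eq: "qmult q n (mon x') (qT i) = qsmult (qcoef q n (a(i := a i - 1)) (ee i)) (mon x)"
            unfolding qT_eq qmult_mon_mon x'_def padd_def fst_conv snd_conv fe xab by simp
          have "qsmult (qcoef q n (a(i := a i - 1)) (ee i)) (E (mon x)) = qzero"
            using der_smult'[OF E mon_carrier[OF x(1)], of "qcoef q n (a(i := a i - 1)) (ee i)"]
            unfolding eq[symmetric]
            using der_mult[OF E mon_carrier[OF x'e] Tc[OF i(1)]] Suc.IH x'e Nx' ET[OF i(1)] by simp
          thus ?thesis using qcoef_nz by (simp add: qsmult_def qzero_def fun_eq_iff)
        next
          case False
          define x' where "x' = (a(i := a i + 1), b)"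
          have x'e: "x' \<in> exps n m" using x xab i by (auto simp: x'_def exps_iff)
          have Nx': "N m x' = K"
            using x xab i False nmeasure_dec1[where i=i and n=n and h="\<lambda>v. nat \<bar>v\<bar>" and a=a and v="a i + 1"] by (simp add: N_def x'_def)
          have fe: "(\<lambda>l. (a(i := a i + 1)) l + - ee i l) = a" by (auto simp: ee_def fun_eq_iff)
          have eq: "qmult q n (mon x') (mon (\<lambda>l. - ee i l, \<lambda>_. 0)) = qsmult (qcoef q n (a(i := a i + 1)) (\<lambda>l. - ee i l)) (mon x)"
            unfolding qmult_mon_mon x'_def padd_def fst_conv snd_conv fe xab by simp
          have "qsmult (qcoef q n (a(i := a i + 1)) (\<lambda>l. - ee i l)) (E (mon x)) = qzero"
            using der_smult'[OF E mon_carrier[OF x(1)], of "qcoef q n (a(i := a i + 1)) (\<lambda>l. - ee i l)"]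
            unfolding eq[symmetric]
            using der_mult[OF E mon_carrier[OF x'e] Tic[OF i(1)]] Suc.IH x'e Nx' ETi[OF i(1)] by simp
          thus ?thesis using qcoef_nz by (simp add: qsmult_def qzero_def fun_eq_iff)
        qed
      qed
    qed
  qed
  have lz: "qlin n m (\<lambda>f. qzero :: 'k qel)" by (simp add: qlin_def)
  show ?thesis using lin_ext[OF der_lin[OF E] lz _ f] main by blast
qed

end


lemma padd_comm: "padd x y = padd y x" by (simp add: padd_def add.commute)

context qt begin

lemma simple_nocentral:
  assumes simple: "qtorus_simple q n" and a0: "\<forall>i. n \<le> i \<longrightarrow> a i = 0"
    and comm: "\<forall>k<n. qcoef q n a (ee k) = qcoef q n (ee k) a"
  shows "a = (\<lambda>_. 0)"
proof (rule ccontr)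
  assume anz: "a \<noteq> (\<lambda>_. 0)"
  define Ta :: "'k qel" where "Ta = mon (a, \<lambda>_. 0)"
  have ae: "(a, \<lambda>_. 0) \<in> exps n 0" using a0 by (simp add: exps_iff)
  have Tac: "Ta \<in> qcarrier n 0" unfolding Ta_def by (rule mon_carrier[OF ae])
  have Ecomm: "qad q n Ta f = qzero" if f: "f \<in> qcarrier n 0" for f :: "'k qel"
  proof (rule der_gen[OF der_ad[OF Tac] _ _ f])
    fix k assume k: "k < n"
    show "qad q n Ta (qT k) = qzero"
      unfolding qad_def Ta_def qT_eq qmult_mon_mon using comm k
      by (simp add: padd_comm qsmult_def qzero_def fun_eq_iff)
  qed simp
  have Tcomm: "qmult q n Ta f = qmult q n f Ta" if f: "f \<in> qcarrier n 0" for f :: "'k qel"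
    using Ecomm[OF f] by (simp add: qad_def qzero_def fun_eq_iff)
  define P :: "'k qel" where "P = (\<lambda>x. Ta x - qone x)"
  have Pc: "P \<in> qcarrier n 0" unfolding P_def by (intro sub_carrier Tac qone_carrier)
  have Pcomm: "qmult q n P f = qmult q n f P" if f: "f \<in> qcarrier n 0" for f :: "'k qel"
    unfolding P_def qmult_sub_left[OF Tac qone_carrier f] qmult_sub_right[OF Tac qone_carrier f]
    using Tcomm[OF f] qone_left[OF f] qone_right[OF f] by simp
  define I where "I = (\<lambda>g. qmult q n P g) ` qcarrier n 0"
  have Isub: "I \<subseteq> qcarrier n 0" unfolding I_def using Pc by (auto intro: qmult_carrier)
  have i2: "qzero \<in> I" unfolding I_def using qzero_carrier[of n 0]
      by (intro image_eqI[of _ _ qzero]) simp_all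
  have i3: "qadd f g \<in> I" if fI: "f \<in> I" and gI: "g \<in> I" for f g :: "'k qel"
  proof -
    obtain f' where f': "f' \<in> qcarrier n 0" "f = qmult q n P f'"
      using fI unfolding I_def by (auto simp: image_iff)
    obtain g' where g': "g' \<in> qcarrier n 0" "g = qmult q n P g'"
      using gI unfolding I_def by (auto simp: image_iff)
    show "qadd f g \<in> I" unfolding I_def f' g' qmult_add_right[OF f'(1) g'(1) Pc, symmetric]
      using f' g' by (auto intro: qadd_carrier)
  qed
  have i4: "qmult q n f g \<in> I \<and> qmult q n g f \<in> I" if f: "f \<in> qcarrier n 0" and gI: "g \<in> I" for f g :: "'k qel"
  proof -
    obtain g' where g': "g' \<in> qcarrier n 0" "g = qmult q n P g'" using gI unfolding I_def by (auto simp: image_iff)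
    have "qmult q n f g = qmult q n P (qmult q n f g')"
      unfolding g'(2) assoc[OF f Pc g'(1), symmetric] Pcomm[OF f, symmetric] assoc[OF Pc f g'(1)] ..
    moreover have "qmult q n g f = qmult q n P (qmult q n g' f)"
      unfolding g'(2) assoc[OF Pc g'(1) f] ..
    ultimately show "qmult q n f g \<in> I \<and> qmult q n g f \<in> I"
      unfolding I_def using f g'(1) by (auto intro: qmult_carrier)
  qed
  have "qideal q n 0 I" unfolding qideal_def using Isub i2 i3 i4 by blast
  hence Ic: "I = {qzero} \<or> I = qcarrier n 0" using simple by (simp add: qtorus_simple_def)
  have "P \<in> I" unfolding I_def using qone_right[OF Pc] qone_carrier[of n 0]
    by (intro image_eqI[of _ _ qone]) simp_all
  moreover have "P \<noteq> qzero"
  proof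
    assume "P = qzero"
    hence "P (a, \<lambda>_. 0) = 0" by (simp add: qzero_def)
    thus False using anz by (simp add: P_def Ta_def mon_def qone_def)
  qed
  ultimately have "I = qcarrier n 0" using Ic by auto
  hence "qone \<in> I" using qone_carrier by simp
  then obtain g where gc: "g \<in> qcarrier n 0" and Pg: "qmult q n P g = qone" unfolding I_def by auto
  have fin: "finite (supp g)" using gc by (simp add: carrier_iff)
  have Pgv: "qmult q n P g c = qcoef q n a (\<lambda>i. fst c i - a i) * g (\<lambda>i. fst c i - a i, snd c) - g c" for c :: "(nat \<Rightarrow> int) \<times> (nat \<Rightarrow> nat)"
  proof -
    have "qmult q n P g c = qmult q n Ta g c - qmult q n qone g c"
      unfolding P_def qmult_sub_left[OF Tac qone_carrier gc] ..
    also have "\<dots> = qcoef q n a (\<lambda>i. fst c i - a i) * g (\<lambda>i. fst c i - a i, snd c) - g c"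
      unfolding qone_left[OF gc] Ta_def qmult_Tl[OF fin] ..
    finally show ?thesis .
  qed
  have gnz: "supp g \<noteq> {}"
  proof
    assume "supp g = {}"
    hence "g = qzero" by (auto simp: supp_def qzero_def fun_eq_iff)
    hence "qmult q n P g = qzero" by simp
    thus False using Pg by (metis qone_def qzero_def zero_neq_one)
  qed
  obtain i where ai: "a i \<noteq> 0" using anz by auto
  define l where "l = (\<lambda>y :: (nat \<Rightarrow> int) \<times> (nat \<Rightarrow> nat). a i * fst y i)"
  define M where "M = Max (l ` supp g)"
  define m0 where "m0 = Min (l ` supp g)"
  have finl: "finite (l ` supp g)" "l ` supp g \<noteq> {}" using fin gnz by auto
  obtain x0 where x0: "x0 \<in> supp g" "l x0 = M" using Max_in[OF finl] unfolding M_def by auto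
  obtain x1 where x1: "x1 \<in> supp g" "l x1 = m0" using Min_in[OF finl] unfolding m0_def by auto
  have leM: "\<And>y. y \<in> supp g \<Longrightarrow> l y \<le> M" unfolding M_def using finl by simp
  have gem: "\<And>y. y \<in> supp g \<Longrightarrow> m0 \<le> l y" unfolding m0_def using finl by simp
  have sq: "a i * a i > 0" using ai by (simp add: zero_less_mult_iff linorder_neq_iff) blast
  define c0 where "c0 = (\<lambda>k. fst x0 k + a k, snd x0)"
  have c0a: "(\<lambda>k. fst c0 k - a k, snd c0) = x0" by (simp add: c0_def)
  have lc0: "l c0 = M + a i * a i" using x0 by (simp add: l_def c0_def algebra_simps)
  have "g c0 = 0"
  proof (rule ccontr)
    assume "g c0 \<noteq> 0"
    hence "l c0 \<le> M" using leM by (simp add: supp_def)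
    thus False using lc0 sq by simp
  qed
  hence "qmult q n P g c0 \<noteq> 0" unfolding Pgv c0a using x0(1) qcoef_nz by (simp add: supp_def)
  hence "c0 = (\<lambda>_. 0, \<lambda>_. 0)" unfolding Pg by (simp add: qone_def split: if_splits)
  hence l0: "l c0 = 0" by (simp add: l_def)
  define c1 where "c1 = (\<lambda>k. fst x1 k - a k, snd x1)"
  have lc1: "l c1 = m0 - a i * a i" using x1 by (simp add: l_def c1_def algebra_simps)
  have "g c1 = 0"
  proof (rule ccontr)
    assume "g c1 \<noteq> 0"
    hence "m0 \<le> l c1" using gem by (simp add: supp_def)
    thus False using lc1 sq by simp
  qed
  hence "qmult q n P g x1 \<noteq> 0" unfolding Pgv using x1(1) by (simp add: supp_def c1_def)
  hence "x1 = (\<lambda>_. 0, \<lambda>_. 0)" unfolding Pg by (simp add: qone_def split: if_splits)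
  hence "m0 = 0" using x1 by (simp add: l_def)
  moreover have "m0 \<le> M" using gem[OF x0(1)] x0(2) by simp
  ultimately show False using l0 lc0 sq by simp
qed

end


lemma qmult_alt: "qmult q n f g c = (\<Sum>x\<in>supp f. \<Sum>y\<in>supp g. if c = padd x y then qcoef q n (fst x) (fst y) * f x * g y else 0)"
  unfolding qmult_def supp_def padd_eq ..

context qt begin

lemma polyX_central:
  assumes z: "z \<in> polyX n m" and f: "f \<in> qcarrier n m"
  shows "qmult q n z f = qmult q n f z"
proof (rule ext)
  fix c
  have z0: "\<And>x. x \<in> supp z \<Longrightarrow> fst x = (\<lambda>_. 0)" using z by (auto simp: polyX_def supp_def)
  have "qmult q n z f c = (\<Sum>x\<in>supp z. \<Sum>y\<in>supp f. if c = padd x y then z x * f y else 0)"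
    unfolding qmult_alt by (intro sum.cong refl) (simp add: z0)
  also have "\<dots> = (\<Sum>y\<in>supp f. \<Sum>x\<in>supp z. if c = padd y x then f y * z x else 0)"
    by (subst sum.swap, rule sum.cong[OF refl], rule sum.cong[OF refl]) (metis padd_comm mult.commute)
  also have "\<dots> = qmult q n f z c"
    unfolding qmult_alt by (intro sum.cong refl) (simp add: z0)
  finally show "qmult q n z f c = qmult q n f z c" .
qed

lemma polyX_center: "polyX n m \<subseteq> qcenter q n m"
  using polyX_central by (auto simp: qcenter_def polyX_def)

lemma center_polyX:
  assumes simple: "qtorus_simple q n"
  shows "qcenter q n m \<subseteq> polyX n m"
proof
  fix z assume zc: "z \<in> qcenter q n m"
  have zC: "z \<in> qcarrier n m" and zf: "\<And>f. f \<in> qcarrier n m \<Longrightarrow> qmult q n z f = qmult q n f z"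
    using zc by (auto simp: qcenter_def)
  have fin: "finite (supp z)" using zC by (simp add: carrier_iff)
  have "fst x = (\<lambda>_. 0)" if zx: "z x \<noteq> 0" for x
  proof -
    obtain a b where x: "x = (a,b)" by (cases x)
    have a0: "\<forall>i. n \<le> i \<longrightarrow> a i = 0" using zC zx x by (auto simp: carrier_iff supp_def exps_iff)
    have "qcoef q n a (ee k) = qcoef q n (ee k) a" if k: "k < n" for k
    proof -
      let ?y = "(\<lambda>l. a l + ee k l, b)"
      have Tc: "qT k \<in> qcarrier n m" unfolding qT_eq by (intro mon_carrier ee_exps k)
      have e: "(\<lambda>i. fst ?y i - ee k i) = a" by (simp add: fun_eq_iff)
      have "qmult q n z (qT k) ?y = qmult q n (qT k) z ?y" using zf[OF Tc] by simp
      hence "qcoef q n a (ee k) * z (a,b) = qcoef q n (ee k) a * z (a,b)"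
        unfolding qT_eq qmult_Tr[OF fin] qmult_Tl[OF fin] e by simp
      thus ?thesis using zx x by simp
    qed
    hence "a = (\<lambda>_. 0)" using simple_nocentral[OF simple a0] by blast
    thus ?thesis using x by simp
  qed
  thus "z \<in> polyX n m" using zC by (auto simp: polyX_def)
qed

end


definition Gd :: "(('k::field) qel \<Rightarrow> 'k qel) \<Rightarrow> nat \<Rightarrow> (nat \<Rightarrow> int) \<times> (nat \<Rightarrow> nat) \<Rightarrow> 'k" where
  "Gd D i x = D (qT i) (\<lambda>l. fst x l + ee i l, snd x)"

context qt begin

definition dl :: "nat \<Rightarrow> (nat \<Rightarrow> int) \<Rightarrow> 'k" where
  "dl i a = qcoef q n a (ee i) - qcoef q n (ee i) a"

lemma Tk_carrier: "k < n \<Longrightarrow> qT k \<in> qcarrier n m"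
  unfolding qT_eq by (intro mon_carrier ee_exps)

lemma rel:
  assumes D: "is_qder q n m D" and i: "i < n" and j: "j < n"
  shows "Gd D j x * dl i (fst x) = Gd D i x * dl j (fst x)"
proof -
  obtain a b where x: "x = (a,b)" by (cases x)
  have Ti: "qT i \<in> qcarrier n m" and Tj: "qT j \<in> qcarrier n m" using i j by (auto intro: Tk_carrier)
  have fi: "finite (supp (D (qT i)))" and fj: "finite (supp (D (qT j)))"
    using der_cl[OF D Ti] der_cl[OF D Tj] by (auto simp: carrier_iff)
  let ?Q1 = "qcoef q n (ee i) (ee j)" and ?Q2 = "qcoef q n (ee j) (ee i)"
  have idt: "qsmult ?Q1 (qmult q n (qT j) (qT i)) = qsmult ?Q2 (qmult q n (qT i) (qT j))"
    unfolding qT_eq qmult_mon_mon qsmult_qsmult fst_conv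
    by (simp add: padd_comm[of "(ee i, \<lambda>_. 0)"] mult.commute)
  have "D (qsmult ?Q1 (qmult q n (qT j) (qT i))) = D (qsmult ?Q2 (qmult q n (qT i) (qT j)))"
    unfolding idt ..
  hence h: "qsmult ?Q1 (qadd (qmult q n (D (qT j)) (qT i)) (qmult q n (qT j) (D (qT i))))
      = qsmult ?Q2 (qadd (qmult q n (D (qT i)) (qT j)) (qmult q n (qT i) (D (qT j))))"
    using der_smult'[OF D qmult_carrier[OF Tj Ti]] der_smult'[OF D qmult_carrier[OF Ti Tj]]
      der_mult[OF D Tj Ti] der_mult[OF D Ti Tj] by simp
  define y where "y = (\<lambda>l. a l + ee i l + ee j l, b)"
  have e1: "(\<lambda>l. fst y l - ee i l) = (\<lambda>l. a l + ee j l)" by (simp add: y_def fun_eq_iff)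
  have e2: "(\<lambda>l. fst y l - ee j l) = (\<lambda>l. a l + ee i l)" by (simp add: y_def fun_eq_iff)
  have sy: "snd y = b" by (simp add: y_def)
  have gi: "Gd D i x = D (qT i) (\<lambda>l. a l + ee i l, b)" and gj: "Gd D j x = D (qT j) (\<lambda>l. a l + ee j l, b)"
    by (simp_all add: Gd_def x)
  have v1: "qmult q n (D (qT j)) (qT i) y = qcoef q n (\<lambda>l. a l + ee j l) (ee i) * Gd D j x"
    unfolding gj qT_eq[of i] qmult_Tr[OF fj] e1 sy ..
  have v2: "qmult q n (qT j) (D (qT i)) y = qcoef q n (ee j) (\<lambda>l. a l + ee i l) * Gd D i x"
    unfolding gi qT_eq[of j] qmult_Tl[OF fi] e2 sy ..
  have v3: "qmult q n (D (qT i)) (qT j) y = qcoef q n (\<lambda>l. a l + ee i l) (ee j) * Gd D i x"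
    unfolding gi qT_eq[of j] qmult_Tr[OF fi] e2 sy ..
  have v4: "qmult q n (qT i) (D (qT j)) y = qcoef q n (ee i) (\<lambda>l. a l + ee j l) * Gd D j x"
    unfolding gj qT_eq[of i] qmult_Tl[OF fj] e1 sy ..
  have "?Q1 * (qcoef q n (\<lambda>l. a l + ee j l) (ee i) * Gd D j x + qcoef q n (ee j) (\<lambda>l. a l + ee i l) * Gd D i x)
      = ?Q2 * (qcoef q n (\<lambda>l. a l + ee i l) (ee j) * Gd D i x + qcoef q n (ee i) (\<lambda>l. a l + ee j l) * Gd D j x)"
    using fun_cong[OF h, of y] unfolding qsmult_def qadd_def v1 v2 v3 v4 .
  hence "?Q1 * ?Q2 * (qcoef q n a (ee i) * Gd D j x + qcoef q n (ee j) a * Gd D i x)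
      = ?Q1 * ?Q2 * (qcoef q n a (ee j) * Gd D i x + qcoef q n (ee i) a * Gd D j x)"
    unfolding qcoef_add1 qcoef_add2 by (simp add: algebra_simps)
  hence "qcoef q n a (ee i) * Gd D j x + qcoef q n (ee j) a * Gd D i x
      = qcoef q n a (ee j) * Gd D i x + qcoef q n (ee i) a * Gd D j x"
    using qcoef_nz by simp
  thus ?thesis unfolding dl_def x fst_conv by (simp add: algebra_simps)
qed

end


lemma qDT_T: "qDT i (qT k) = (if i = k then qT k else qzero)"
proof (rule ext)
  fix x :: "(nat \<Rightarrow> int) \<times> (nat \<Rightarrow> nat)"
  show "qDT i (qT k) x = (if i = k then qT k else qzero) x"
  proof (cases "x = (\<lambda>l. if l = k then 1 else 0, \<lambda>_. 0)")
    case True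
    then show ?thesis by (simp add: qDT_def qT_def qzero_def)
  next
    case False
    then show ?thesis by (simp add: qDT_def qT_def qzero_def)
  qed
qed
lemma qDT_X: "qDT i (qX k) = qzero"
  by (auto simp: qDT_def qX_def qzero_def fun_eq_iff)
lemma qDX_T: "qDX j (qT k) = qzero"
  by (auto simp: qDX_def qT_def qzero_def fun_eq_iff)
lemma qDX_X: "qDX j (qX k) = (if j = k then qone else qzero)"
  unfolding qX_eq qDX_mon by (auto simp: eX_def qsmult_def qzero_def qone_mon fun_eq_iff mon_def)

lemma qzero_apply: "qzero x = 0" by (simp add: qzero_def)

context qt begin

lemma qX_polyX: "j < m \<Longrightarrow> qX j \<in> polyX n m"
  unfolding polyX_def qX_eq using mon_carrier[OF eX_exps, of j m n] by (auto simp: mon_def)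

lemma der_decomp:
  assumes simple: "qtorus_simple q n" and D: "is_qder q n m D"
  shows "\<exists>u\<in>qcarrier n m. \<exists>z w. (\<forall>i<n. z i \<in> qcenter q n m) \<and> (\<forall>j<m. w j \<in> qcenter q n m)
             \<and> (\<forall>f\<in>qcarrier n m. D f = qcomb q n m u z w f)"
proof -
  define w where "w j = D (qX j)" for j
  have Xc: "\<And>j. j < m \<Longrightarrow> qX j \<in> qcarrier n m" using qX_polyX by (auto simp: polyX_def)
  have wc: "w j \<in> qcenter q n m" if j: "j < m" for j
  proof -
    have "qmult q n (w j) f = qmult q n f (w j)" if f: "f \<in> qcarrier n m" for f
    proof -
      have "D (qmult q n (qX j) f) = D (qmult q n f (qX j))" using polyX_central[OF qX_polyX[OF j] f] by simp
      hence "qadd (qmult q n (w j) f) (qmult q n (qX j) (D f)) = qadd (qmult q n (D f) (qX j)) (qmult q n f (w j))"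
        using der_mult[OF D Xc[OF j] f] der_mult[OF D f Xc[OF j]] by (simp add: w_def)
      moreover have "qmult q n (qX j) (D f) = qmult q n (D f) (qX j)"
        using polyX_central[OF qX_polyX[OF j] der_cl[OF D f]] .
      ultimately show ?thesis by (simp add: qadd_def fun_eq_iff)
    qed
    thus ?thesis using der_cl[OF D Xc[OF j]] by (simp add: qcenter_def w_def)
  qed
  define G where "G = Gd D"
  define sel where "sel a = (SOME i. i < n \<and> dl i a \<noteq> 0)" for a
  define u where "u x = (if \<exists>i<n. dl i (fst x) \<noteq> 0 then G (sel (fst x)) x / dl (sel (fst x)) (fst x) else 0)" for x
  define z where "z i x = (if fst x = (\<lambda>_. 0) then G i x else 0)" for i x
  have dl0: "dl i (\<lambda>_. 0) = 0" for i by (simp add: dl_def)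
  have Gexps: "x \<in> exps n m" if i: "i < n" and nz: "G i x \<noteq> 0" for i x
  proof -
    have "(\<lambda>l. fst x l + ee i l, snd x) \<in> exps n m"
      using nz der_cl[OF D Tk_carrier[OF i]] by (auto simp: G_def Gd_def carrier_iff supp_def)
    thus ?thesis using i by (auto simp: exps_iff ee_def)
  qed
  have Gsupp: "supp (G i) \<subseteq> (\<lambda>y. (\<lambda>l. fst y l - ee i l, snd y)) ` supp (D (qT i))" for i
  proof
    fix x assume "x \<in> supp (G i)"
    thus "x \<in> (\<lambda>y. (\<lambda>l. fst y l - ee i l, snd y)) ` supp (D (qT i))"
      by (intro image_eqI[of _ _ "(\<lambda>l. fst x l + ee i l, snd x)"]) (auto simp: G_def Gd_def supp_def)
  qed
  have finG: "finite (supp (G i))" if "i < n" for i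
    using Gsupp[of i] der_cl[OF D Tk_carrier[OF that]] by (auto simp: carrier_iff intro: finite_subset)
  have key: "G i x = u x * dl i (fst x) + z i x" if i: "i < n" for i x
  proof (cases "\<exists>k<n. dl k (fst x) \<noteq> 0")
    case True
    hence s: "sel (fst x) < n \<and> dl (sel (fst x)) (fst x) \<noteq> 0" unfolding sel_def by (rule someI_ex)
    have f0: "fst x \<noteq> (\<lambda>_. 0)" using True dl0 by auto
    have r: "G (sel (fst x)) x * dl i (fst x) = G i x * dl (sel (fst x)) (fst x)"
      unfolding G_def by (rule rel[OF D i s[THEN conjunct1]])
    show ?thesis using True f0 s r by (simp add: u_def z_def field_simps)
  next
    case False
    show ?thesis
    proof (cases "fst x = (\<lambda>_. 0)")
      case True
      then show ?thesis using False by (simp add: u_def z_def dl0)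
    next
      case f0: False
      have "G i x = 0"
      proof (rule ccontr)
        assume "G i x \<noteq> 0"
        hence xe: "x \<in> exps n m" by (rule Gexps[OF i])
        have "fst x = (\<lambda>_. 0)"
          by (rule simple_nocentral[OF simple]) (use xe False in \<open>auto simp: exps_iff dl_def\<close>)
        thus False using f0 by simp
      qed
      thus ?thesis using False f0 i by (auto simp: u_def z_def)
    qed
  qed
  have uC: "u \<in> qcarrier n m"
  proof -
    have sub: "supp u \<subseteq> (\<Union>i<n. supp (G i))"
    proof
      fix x assume "x \<in> supp u"
      hence "\<exists>i<n. dl i (fst x) \<noteq> 0" and g: "G (sel (fst x)) x \<noteq> 0" by (auto simp: supp_def u_def split: if_splits)
      moreover have "sel (fst x) < n" using calculation(1) unfolding sel_def by (metis (mono_tags, lifting) someI_ex)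
      ultimately show "x \<in> (\<Union>i<n. supp (G i))" by (auto simp: supp_def)
    qed
    have "finite (supp u)" using sub finG by (auto intro: finite_subset)
    moreover have "supp u \<subseteq> exps n m" using sub Gexps by (auto simp: supp_def)
    ultimately show ?thesis by (simp add: carrier_iff)
  qed
  have zP: "z i \<in> polyX n m" if i: "i < n" for i
  proof -
    have sub: "supp (z i) \<subseteq> supp (G i)" by (auto simp: supp_def z_def)
    have "z i \<in> qcarrier n m"
      using sub finG[OF i] Gexps[OF i] by (auto simp: carrier_iff supp_def intro: finite_subset)
    thus ?thesis by (auto simp: polyX_def z_def split: if_splits)
  qed
  have zc: "z i \<in> qcenter q n m" if "i < n" for i using zP[OF that] polyX_center by auto
  define E where "E f = (\<lambda>x. D f x - qcomb q n m u z w f x)" for f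
  have Eeq: "E = (\<lambda>f. qadd (D f) (qsmult (-1) (qcomb q n m u z w f)))"
    by (simp add: E_def qadd_def qsmult_def fun_eq_iff)
  have Eder: "is_qder q n m E" unfolding Eeq
    by (intro der_add D der_smult qcomb_der uC) (use zc wc in auto)
  have EX: "E (qX j) = qzero" if j: "j < m" for j
  proof -
    have "qad q n u (qX j) = qzero"
      using polyX_central[OF qX_polyX[OF j] uC] by (simp add: qad_def qzero_def fun_eq_iff)
    moreover have "(\<Sum>l<m. qmult q n (w l) (qDX l (qX j)) x) = w j x" for x
    proof -
      have "(\<Sum>l<m. qmult q n (w l) (qDX l (qX j)) x) = (\<Sum>l<m. if l = j then w j x else 0)"
        by (intro sum.cong refl) (auto simp: qDX_X qone_right[OF wc[OF j, unfolded qcenter_def, THEN CollectD, THEN conjunct1]] qzero_apply)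
      also have "\<dots> = w j x" using j by simp
      finally show ?thesis .
    qed
    ultimately show ?thesis by (simp add: E_def qcomb_def qDT_X qzero_apply w_def fun_eq_iff)
  qed
  have ET: "E (qT k) = qzero" if k: "k < n" for k
  proof (rule ext)
    fix y :: "(nat \<Rightarrow> int) \<times> (nat \<Rightarrow> nat)"
    define x where "x = (\<lambda>l. fst y l - ee k l, snd y)"
    have finu: "finite (supp u)" using uC by (simp add: carrier_iff)
    have finz: "finite (supp (z k))" using zP[OF k] by (simp add: polyX_def carrier_iff)
    have s1: "(\<Sum>i<n. qmult q n (z i) (qDT i (qT k)) y) = qmult q n (z k) (qT k) y"
    proof -
      have "(\<Sum>i<n. qmult q n (z i) (qDT i (qT k)) y) = (\<Sum>i<n. if i = k then qmult q n (z k) (qT k) y else 0)"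
        by (intro sum.cong refl) (simp add: qDT_T qzero_apply)
      thus ?thesis using k by simp
    qed
    have s2: "(\<Sum>j<m. qmult q n (w j) (qDX j (qT k)) y) = 0" by (simp add: qDX_T qzero_apply)
    have zk: "qcoef q n (fst x) (ee k) * z k x = z k x" by (simp add: z_def)
    have "qcomb q n m u z w (qT k) y = qcoef q n (fst x) (ee k) * u x - qcoef q n (ee k) (fst x) * u x
         + qcoef q n (fst x) (ee k) * z k x"
      unfolding qcomb_def qad_def s1 s2
      unfolding qT_eq qmult_Tr[OF finu] qmult_Tl[OF finu] qmult_Tr[OF finz]
      by (simp add: x_def)
    also have "\<dots> = G k x" unfolding zk key[OF k] by (simp add: dl_def algebra_simps)
    also have "\<dots> = D (qT k) y" by (simp add: G_def Gd_def x_def)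
    finally show "E (qT k) y = qzero y" by (simp add: E_def qzero_def)
  qed
  have "\<forall>f\<in>qcarrier n m. D f = qcomb q n m u z w f"
  proof
    fix f :: "'k qel" assume f: "f \<in> qcarrier n m"
    have "E f = qzero" by (rule der_gen[OF Eder ET EX f])
    thus "D f = qcomb q n m u z w f" by (simp add: E_def qzero_def fun_eq_iff)
  qed
  thus ?thesis using uC zc wc by blast
qed

end


lemma der_cong:
  assumes D': "is_qder q n m D'" and eq: "\<forall>f\<in>qcarrier n m. D f = D' f"
  shows "is_qder q n m D"
  using D' eq unfolding is_qder_def
  by (simp add: qadd_carrier qsmult_carrier qmult_carrier)

context qt begin

lemma qcomb_X:
  assumes u: "u \<in> qcarrier n m" and j: "j < m" and wj: "w j \<in> qcarrier n m"
  shows "qcomb q n m u z w (qX j) = w j"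
proof -
  have "qad q n u (qX j) = qzero"
    using polyX_central[OF qX_polyX[OF j] u] by (simp add: qad_def qzero_def fun_eq_iff)
  moreover have "(\<Sum>l<m. qmult q n (w l) (qDX l (qX j)) x) = w j x" for x
  proof -
    have "(\<Sum>l<m. qmult q n (w l) (qDX l (qX j)) x) = (\<Sum>l<m. if l = j then w j x else 0)"
      by (intro sum.cong refl) (auto simp: qDX_X qone_right[OF wj] qzero_apply)
    also have "\<dots> = w j x" using j by simp
    finally show ?thesis .
  qed
  ultimately show ?thesis by (simp add: qcomb_def qDT_X qzero_apply fun_eq_iff)
qed

lemma qcomb_T:
  assumes u: "u \<in> qcarrier n m" and k: "k < n" and zk: "z k \<in> qcarrier n m"
  shows "qcomb q n m u z w (qT k) y = qcoef q n (\<lambda>l. fst y l - ee k l) (ee k) * u (\<lambda>l. fst y l - ee k l, snd y)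
     - qcoef q n (ee k) (\<lambda>l. fst y l - ee k l) * u (\<lambda>l. fst y l - ee k l, snd y)
     + qcoef q n (\<lambda>l. fst y l - ee k l) (ee k) * z k (\<lambda>l. fst y l - ee k l, snd y)"
proof -
  have finu: "finite (supp u)" using u by (simp add: carrier_iff)
  have finz: "finite (supp (z k))" using zk by (simp add: carrier_iff)
  have s1: "(\<Sum>i<n. qmult q n (z i) (qDT i (qT k)) y) = qmult q n (z k) (qT k) y"
  proof -
    have "(\<Sum>i<n. qmult q n (z i) (qDT i (qT k)) y) = (\<Sum>i<n. if i = k then qmult q n (z k) (qT k) y else 0)"
      by (intro sum.cong refl) (simp add: qDT_T qzero_apply)
    thus ?thesis using k by simp
  qed
  have s2: "(\<Sum>j<m. qmult q n (w j) (qDX j (qT k)) y) = 0" by (simp add: qDX_T qzero_apply)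
  show ?thesis
    unfolding qcomb_def qad_def s1 s2
    unfolding qT_eq qmult_Tr[OF finu] qmult_Tl[OF finu] qmult_Tr[OF finz]
    by simp
qed

lemma comb_unique:
  assumes simple: "qtorus_simple q n" and u: "u \<in> qcarrier n m"
    and z: "\<forall>i<n. z i \<in> qcenter q n m" and w: "\<forall>j<m. w j \<in> qcenter q n m"
    and c0: "\<forall>f\<in>qcarrier n m. qcomb q n m u z w f = qzero"
  shows "(\<forall>f\<in>qcarrier n m. qad q n u f = qzero)
            \<and> (\<forall>i<n. \<forall>f\<in>qcarrier n m. qmult q n (z i) (qDT i f) = qzero)
            \<and> (\<forall>j<m. \<forall>f\<in>qcarrier n m. qmult q n (w j) (qDX j f) = qzero)"
proof -
  have wC: "\<And>j. j < m \<Longrightarrow> w j \<in> qcarrier n m" using w by (auto simp: qcenter_def)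
  have zC: "\<And>i. i < n \<Longrightarrow> z i \<in> qcarrier n m" using z by (auto simp: qcenter_def)
  have w0: "w j = qzero" if j: "j < m" for j
    using c0 qcomb_X[where w=w and z=z, OF u j wC[OF j]] qX_polyX[OF j] by (auto simp: polyX_def)
  have z0: "z k = qzero" if k: "k < n" for k
  proof (rule ext)
    fix x :: "(nat \<Rightarrow> int) \<times> (nat \<Rightarrow> nat)"
    have zP: "z k \<in> polyX n m" using z k center_polyX[OF simple] by auto
    show "z k x = qzero x"
    proof (cases "fst x = (\<lambda>_. 0)")
      case True
      define y where "y = (ee k, snd x)"
      have ey: "(\<lambda>l. fst y l - ee k l, snd y) = x" using True by (simp add: y_def prod_eq_iff)
      have ey2: "(\<lambda>l. fst y l - ee k l) = (\<lambda>_. 0)" by (simp add: y_def)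
      have "qcomb q n m u z w (qT k) y = z k x"
        unfolding qcomb_T[where z=z and w=w, OF u k zC[OF k]] ey unfolding ey2 by simp
      moreover have "qcomb q n m u z w (qT k) y = 0"
        using bspec[OF c0 Tk_carrier[OF k]] by (simp add: qzero_apply)
      ultimately show ?thesis by (simp add: qzero_apply)
    next
      case False
      have "\<forall>x. z k x \<noteq> 0 \<longrightarrow> fst x = (\<lambda>_. 0)" using zP by (simp add: polyX_def)
      then show ?thesis using False unfolding qzero_apply by blast
    qed
  qed
  have a: "qad q n u f = qzero" if f: "f \<in> qcarrier n m" for f
  proof -
    have "qcomb q n m u z w f = qad q n u f"
      unfolding qcomb_def using z0 w0 by (simp add: qzero_apply)
    thus ?thesis using c0 f by simp
  qed
  show ?thesis using a z0 w0 by simp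
qed

end

theorem corollary2p2:
  fixes q :: "nat \<Rightarrow> nat \<Rightarrow> 'k::field_char_0" and n m :: nat
  assumes "mult_skew q n" and "qtorus_simple q n"
  shows "qcenter q n m = polyX n m
    \<and> (\<forall>i<n. is_qder q n m (qDT i)
          \<and> (\<forall>k<n. qDT i (qT k) = (if i = k then qT k else qzero))
          \<and> (\<forall>k<m. qDT i (qX k) = qzero))
    \<and> (\<forall>j<m. is_qder q n m (qDX j)
          \<and> (\<forall>k<n. qDX j (qT k) = qzero)
          \<and> (\<forall>k<m. qDX j (qX k) = (if j = k then qone else qzero)))
    \<and> (\<forall>D. is_qder q n m D \<longleftrightarrow>
          (\<exists>u\<in>qcarrier n m. \<exists>z w. (\<forall>i<n. z i \<in> qcenter q n m) \<and> (\<forall>j<m. w j \<in> qcenter q n m)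
             \<and> (\<forall>f\<in>qcarrier n m. D f = qcomb q n m u z w f)))
    \<and> (\<forall>u\<in>qcarrier n m. \<forall>z w. (\<forall>i<n. z i \<in> qcenter q n m) \<and> (\<forall>j<m. w j \<in> qcenter q n m)
          \<and> (\<forall>f\<in>qcarrier n m. qcomb q n m u z w f = qzero)
          \<longrightarrow> (\<forall>f\<in>qcarrier n m. qad q n u f = qzero)
            \<and> (\<forall>i<n. \<forall>f\<in>qcarrier n m. qmult q n (z i) (qDT i f) = qzero)
            \<and> (\<forall>j<m. \<forall>f\<in>qcarrier n m. qmult q n (w j) (qDX j f) = qzero))"
proof -
  interpret qt q n by unfold_locales (rule assms(1))
  have c: "qcenter q n m = polyX n m" using center_polyX[OF assms(2)] polyX_center by blast
  have d: "is_qder q n m D \<longleftrightarrow>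
          (\<exists>u\<in>qcarrier n m. \<exists>z w. (\<forall>i<n. z i \<in> qcenter q n m) \<and> (\<forall>j<m. w j \<in> qcenter q n m)
             \<and> (\<forall>f\<in>qcarrier n m. D f = qcomb q n m u z w f))" for D
  proof
    assume "is_qder q n m D"
    thus "\<exists>u\<in>qcarrier n m. \<exists>z w. (\<forall>i<n. z i \<in> qcenter q n m) \<and> (\<forall>j<m. w j \<in> qcenter q n m)
             \<and> (\<forall>f\<in>qcarrier n m. D f = qcomb q n m u z w f)" by (rule der_decomp[OF assms(2)])
  next
    assume "\<exists>u\<in>qcarrier n m. \<exists>z w. (\<forall>i<n. z i \<in> qcenter q n m) \<and> (\<forall>j<m. w j \<in> qcenter q n m)
             \<and> (\<forall>f\<in>qcarrier n m. D f = qcomb q n m u z w f)"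
    then obtain u z w where u: "u \<in> qcarrier n m" and z: "\<forall>i<n. z i \<in> qcenter q n m"
      and w: "\<forall>j<m. w j \<in> qcenter q n m" and eq: "\<forall>f\<in>qcarrier n m. D f = qcomb q n m u z w f" by blast
    show "is_qder q n m D" by (rule der_cong[OF qcomb_der[OF u z w] eq])
  qed
  have p2: "\<forall>i<n. is_qder q n m (qDT i)
          \<and> (\<forall>k<n. qDT i (qT k) = (if i = k then qT k else qzero))
          \<and> (\<forall>k<m. qDT i (qX k) = qzero)" using qDT_der qDT_T qDT_X by blast
  have p3: "\<forall>j<m. is_qder q n m (qDX j)
          \<and> (\<forall>k<n. qDX j (qT k) = qzero)
          \<and> (\<forall>k<m. qDX j (qX k) = (if j = k then qone else qzero))" using qDX_der qDX_T qDX_X by blast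
  have p4: "\<forall>D. is_qder q n m D \<longleftrightarrow>
          (\<exists>u\<in>qcarrier n m. \<exists>z w. (\<forall>i<n. z i \<in> qcenter q n m) \<and> (\<forall>j<m. w j \<in> qcenter q n m)
             \<and> (\<forall>f\<in>qcarrier n m. D f = qcomb q n m u z w f))" using d by blast
  have p5: "\<forall>u\<in>qcarrier n m. \<forall>z w. (\<forall>i<n. z i \<in> qcenter q n m) \<and> (\<forall>j<m. w j \<in> qcenter q n m)
          \<and> (\<forall>f\<in>qcarrier n m. qcomb q n m u z w f = qzero)
          \<longrightarrow> (\<forall>f\<in>qcarrier n m. qad q n u f = qzero)
            \<and> (\<forall>i<n. \<forall>f\<in>qcarrier n m. qmult q n (z i) (qDT i f) = qzero)
            \<and> (\<forall>j<m. \<forall>f\<in>qcarrier n m. qmult q n (w j) (qDX j f) = qzero)"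
    using comb_unique[OF assms(2)] by blast
  show ?thesis by (intro conjI c p2 p3 p4 p5)
qed


end
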